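(* Let $0<k<1$, $\gamma>0$, $\delta>1$, and $Z=\{(\tau,s)\in\mathcal C:g(\tau,s)=0\}$. (W) If $1<\delta<\Phi$ and $\gamma>\gamma_-(\delta)$, then $Z=\emptyset$. (X) If $1<\delta<\Phi$ and $\gamma_+(\delta)<\gamma<\gamma_-(\delta)$, then there are $0<\tau_1<\tau_2<1$ such that $Z\cap(\{\tau\}\times S^1)$ has exactly two points for $\tau\in(\tau_1,\tau_2)$, is the single point $(\tau,3\pi/2)$ for $\tau\in\{\tau_1,\tau_2\}$, and is empty otherwise; $(\tau_1,3\pi/2)$ is a supercritical and $(\tau_2,3\pi/2)$ a subcritical fold point; $Z$ is a simple closed curve that is contractible in $\mathcal C$. (Y) If $1<\delta<\Phi$ and $0<\gamma<\gamma_+(\delta)$, then there are $0<a_1<a_2<a_3<a_4<1$ such that $Z\cap(\{\tau\}\times S^1)$ has exactly two points for $\tau\in(a_1,a_2)\cup(a_3,a_4)$, is the single point $(a_1,3\pi/2)$, $(a_2,\pi/2)$, $(a_3,\pi/2)$, $(a_4,3\pi/2)$ for $\tau=a_1,a_2,a_3,a_4$ respectively, and is empty otherwise; these four points are fold points, supercritical at $a_1,a_3$ and subcritical at $a_2,a_4$; $Z$ is the union of two disjoint simple closed curves, each non-contractible in $\mathcal C$. (Z) If $\delta>\Phi$, then there are $0<b_1<b_2<1$ such that $Z\cap(\{\tau\}\times S^1)$ has exactly two points for $\tau\in(b_1,b_2)$, is the single point $(b_1,\pi/2)$, resp. $(b_2,3\pi/2)$, for $\tau=b_1$, resp. $b_2$,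 and is empty otherwise; $(b_1,\pi/2)$ is a supercritical and $(b_2,3\pi/2)$ a subcritical fold point; $Z$ is a simple closed curve non-contractible in $\mathcal C$.
   Context: Let $S^1=\mathbb R/2\pi\mathbb Z$ and $\mathcal C=\{(\tau,s):0<\tau\le1,\ s\in S^1\}$. Let $p(\delta)=-\delta^2+\delta+1$, $\Phi=(1+\sqrt5)/2$. For parameters $\delta>1$, $\gamma>0$, $k>0$ define $g:\mathcal C\to\mathbb R$, $g(\tau,s)=\tau^{\delta^2}+\gamma\tau^{\delta^2-\delta}(1+k\sin s)-\tau$; thus $g(\tau,s)=0$ iff $\gamma(1+k\sin s)=\mathcal F_\delta(\tau)$, where $\mathcal F_\delta(\tau)=\tau^{p(\delta)}-\tau^\delta$. For $1<\delta<\Phi$, $M_{\mathcal F}(\delta)=\max_{(0,1]}\mathcal F_\delta>0$, $\gamma_+(\delta)=M_{\mathcal F}(\delta)/(1+k)$ and (for $k<1$) $\gamma_-(\delta)=M_{\mathcal F}(\delta)/(1-k)$. A fold point is a point $(\tau_0,s_0)\in\mathcal C$ with $g(\tau_0,s_0)=0$ and $\partial g/\partial s(\tau_0,s_0)=0$. It is supercritical if there is a neighbourhood $U$ of $(\tau_0,s_0)$ such that for $\tau>\tau_0$ close to $\tau_0$ the set $\{s:(\tau,s)\in U,\ g(\tau,s)=0\}$ has exactly two elements, for $\tau=\tau_0$ exactly one, and for $\tau<\tau_0$ close to $\tau_0$ none; subcritical if the same holds with the roles of $\tau>\tau_0$ and $\tau<\tau_0$ interchanged. *)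

theory Defs
  imports "HOL-Analysis.Analysis"
begin

text \<open>The circle S^1 = R/2piZ is modelled as the unit circle in the complex plane,
  the class of s being cis s. The cylinder C = (0,1] x S^1 is a subset of real x complex.\<close>

definition Phi :: real where "Phi = (1 + sqrt 5) / 2"

definition pdelta :: "real \<Rightarrow> real" where "pdelta \<delta> = 1 + \<delta> - \<delta>^2"

definition cyl :: "(real \<times> complex) set" where
  "cyl = {(\<tau>, z). 0 < \<tau> \<and> \<tau> \<le> 1 \<and> z \<in> sphere 0 1}"

text \<open>g(tau,s) for real representatives s of points of S^1 (2pi-periodic in s).\<close>
definition gfun :: "real \<Rightarrow> real \<Rightarrow> real \<Rightarrow> real \<Rightarrow> real \<Rightarrow> real" where
  "gfun \<delta> \<gamma> k \<tau> s = \<tau> powr (\<delta>^2) + \<gamma> * \<tau> powr (\<delta>^2 - \<delta>) * (1 + k * sin s) - \<tau>"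

definition FF :: "real \<Rightarrow> real \<Rightarrow> real" where
  "FF \<delta> \<tau> = \<tau> powr (pdelta \<delta>) - \<tau> powr \<delta>"

definition MF :: "real \<Rightarrow> real" where
  "MF \<delta> = Sup (FF \<delta> ` {0<..1})"

definition gamma_plus :: "real \<Rightarrow> real \<Rightarrow> real" where
  "gamma_plus k \<delta> = MF \<delta> / (1 + k)"

definition gamma_minus :: "real \<Rightarrow> real \<Rightarrow> real" where
  "gamma_minus k \<delta> = MF \<delta> / (1 - k)"

definition Zset :: "real \<Rightarrow> real \<Rightarrow> real \<Rightarrow> (real \<times> complex) set" where
  "Zset \<delta> \<gamma> k = {(\<tau>, cis s) | \<tau> s. 0 < \<tau> \<and> \<tau> \<le> 1 \<and> gfun \<delta> \<gamma> k \<tau> s = 0}"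

definition fibre :: "real \<Rightarrow> real \<Rightarrow> real \<Rightarrow> real \<Rightarrow> complex set" where
  "fibre \<delta> \<gamma> k \<tau> = {z. (\<tau>, z) \<in> Zset \<delta> \<gamma> k}"

definition fold_point :: "real \<Rightarrow> real \<Rightarrow> real \<Rightarrow> real \<Rightarrow> real \<Rightarrow> bool" where
  "fold_point \<delta> \<gamma> k \<tau>0 s0 \<longleftrightarrow> 0 < \<tau>0 \<and> \<tau>0 \<le> 1 \<and> gfun \<delta> \<gamma> k \<tau>0 s0 = 0 \<and>
     ((\<lambda>s. gfun \<delta> \<gamma> k \<tau>0 s) has_real_derivative 0) (at s0)"

definition supercritical :: "real \<Rightarrow> real \<Rightarrow> real \<Rightarrow> real \<Rightarrow> real \<Rightarrow> bool" where
  "supercritical \<delta> \<gamma> k \<tau>0 s0 \<longleftrightarrow>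
     (\<exists>U. open U \<and> (\<tau>0, cis s0) \<in> U \<and> (\<exists>\<epsilon>>0. \<forall>\<tau>.
        (\<tau>0 < \<tau> \<and> \<tau> < \<tau>0 + \<epsilon> \<longrightarrow> card {z. (\<tau>, z) \<in> U \<inter> Zset \<delta> \<gamma> k} = 2) \<and>
        (\<tau> = \<tau>0 \<longrightarrow> card {z. (\<tau>, z) \<in> U \<inter> Zset \<delta> \<gamma> k} = 1) \<and>
        (\<tau>0 - \<epsilon> < \<tau> \<and> \<tau> < \<tau>0 \<longrightarrow> {z. (\<tau>, z) \<in> U \<inter> Zset \<delta> \<gamma> k} = {})))"

definition subcritical :: "real \<Rightarrow> real \<Rightarrow> real \<Rightarrow> real \<Rightarrow> real \<Rightarrow> bool" where
  "subcritical \<delta> \<gamma> k \<tau>0 s0 \<longleftrightarrow>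
     (\<exists>U. open U \<and> (\<tau>0, cis s0) \<in> U \<and> (\<exists>\<epsilon>>0. \<forall>\<tau>.
        (\<tau>0 - \<epsilon> < \<tau> \<and> \<tau> < \<tau>0 \<longrightarrow> card {z. (\<tau>, z) \<in> U \<inter> Zset \<delta> \<gamma> k} = 2) \<and>
        (\<tau> = \<tau>0 \<longrightarrow> card {z. (\<tau>, z) \<in> U \<inter> Zset \<delta> \<gamma> k} = 1) \<and>
        (\<tau>0 < \<tau> \<and> \<tau> < \<tau>0 + \<epsilon> \<longrightarrow> {z. (\<tau>, z) \<in> U \<inter> Zset \<delta> \<gamma> k} = {})))"

definition simple_loop :: "(real \<Rightarrow> 'a::topological_space) \<Rightarrow> bool" where
  "simple_loop p \<longleftrightarrow> simple_path p \<and> pathfinish p = pathstart p"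

definition simple_closed_curve :: "'a::real_normed_vector set \<Rightarrow> bool" where
  "simple_closed_curve A \<longleftrightarrow> (\<exists>p. simple_loop p \<and> path_image p = A)"

definition contractible_loop_in :: "'a::real_normed_vector set \<Rightarrow> (real \<Rightarrow> 'a) \<Rightarrow> bool" where
  "contractible_loop_in S p \<longleftrightarrow> (\<exists>a. homotopic_loops S p (\<lambda>_. a))"

definition curve_contractible_in :: "'a::real_normed_vector set \<Rightarrow> 'a set \<Rightarrow> bool" where
  "curve_contractible_in S A \<longleftrightarrow>
     (\<forall>p. simple_loop p \<and> path_image p = A \<longrightarrow> contractible_loop_in S p)"

definition curve_noncontractible_in :: "'a::real_normed_vector set \<Rightarrow> 'a set \<Rightarrow> bool" where
  "curve_noncontractible_in S A \<longleftrightarrow>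
     (\<forall>p. simple_loop p \<and> path_image p = A \<longrightarrow> \<not> contractible_loop_in S p)"

end

theory Submission
  imports Defs "HOL-Complex_Analysis.Complex_Analysis"
begin

lemma p_pos: assumes "1 < \<delta>" "\<delta> < Phi" shows "0 < pdelta \<delta>"
proof -
  have "2*\<delta> - 1 < sqrt 5" using assms unfolding Phi_def by simp
  hence "(2*\<delta>-1)^2 < (sqrt 5)^2" using assms by (intro power_strict_mono) auto
  hence "(2*\<delta>-1)^2 < 5" by simp
  thus ?thesis unfolding pdelta_def by (simp add: power2_eq_square algebra_simps)
qed

lemma p_neg: assumes "1 < \<delta>" "\<delta> > Phi" shows "pdelta \<delta> < 0"
proof -
  have "2*\<delta> - 1 > sqrt 5" using assms unfolding Phi_def by simp
  hence "(2*\<delta>-1)^2 > (sqrt 5)^2" using assms by (intro power_strict_mono) auto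
  hence "(2*\<delta>-1)^2 > 5" by simp
  thus ?thesis unfolding pdelta_def by (simp add: power2_eq_square algebra_simps)
qed

lemma p_lt: assumes "1 < \<delta>" shows "pdelta \<delta> < \<delta>"
proof -
  have "1 < \<delta>*\<delta>" using assms by (metis less_1_mult)
  thus ?thesis unfolding pdelta_def by (simp add: power2_eq_square)
qed

lemma FF_eq: "FF \<delta> = (\<lambda>t. t powr pdelta \<delta> - t powr \<delta>)"
  by (rule ext) (simp add: FF_def)

lemma FF_deriv: "0 < t \<Longrightarrow> (FF \<delta> has_real_derivative
   (pdelta \<delta> * t powr (pdelta \<delta> - 1) - \<delta> * t powr (\<delta> - 1))) (at t)"
  unfolding FF_eq by (intro DERIV_diff has_real_derivative_powr)

lemma FF_cont: "0 < a \<Longrightarrow> continuous_on {a..b} (FF \<delta>)"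
  by (intro continuous_at_imp_continuous_on ballI DERIV_isCont[OF FF_deriv]) auto

lemma FF_1: "FF \<delta> 1 = 0" by (simp add: FF_def)

lemma deriv_factor: assumes "0 < t"
  shows "pdelta \<delta> * t powr (pdelta \<delta> - 1) - \<delta> * t powr (\<delta> - 1)
     = t powr (pdelta \<delta> - 1) * (pdelta \<delta> - \<delta> * t powr (\<delta> - pdelta \<delta>))"
proof -
  have "t powr (\<delta> - 1) = t powr (pdelta \<delta> - 1) * t powr (\<delta> - pdelta \<delta>)"
    using assms by (simp add: powr_add[symmetric])
  thus ?thesis by (simp add: algebra_simps)
qed

context
  fixes \<delta> :: real
  assumes d1: "1 < \<delta>" and dP: "\<delta> < Phi"
begin

definition tm where "tm = (pdelta \<delta> / \<delta>) powr (1 / (\<delta> - pdelta \<delta>))"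

lemma tm_pos: "0 < tm" and tm_lt1: "tm < 1" and tm_pow: "tm powr (\<delta> - pdelta \<delta>) = pdelta \<delta> / \<delta>"
proof -
  have p: "0 < pdelta \<delta>" "pdelta \<delta> < \<delta>" using p_pos[OF d1 dP] p_lt[OF d1] by auto
  hence q: "0 < pdelta \<delta> / \<delta>" "pdelta \<delta> / \<delta> < 1" by auto
  show "0 < tm" unfolding tm_def using q p by simp
  have "tm < 1 powr (1 / (\<delta> - pdelta \<delta>))" unfolding tm_def
    using q p by (intro powr_less_mono2) auto
  thus "tm < 1" by simp
  show "tm powr (\<delta> - pdelta \<delta>) = pdelta \<delta> / \<delta>" unfolding tm_def
    using q p by (simp add: powr_powr)
qed

lemma deriv_pos: assumes "0 < t" "t < tm"
  shows "pdelta \<delta> * t powr (pdelta \<delta> - 1) - \<delta> * t powr (\<delta> - 1) > 0"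
proof -
  have p: "0 < pdelta \<delta>" "pdelta \<delta> < \<delta>" using p_pos[OF d1 dP] p_lt[OF d1] by auto
  have "t powr (\<delta> - pdelta \<delta>) < tm powr (\<delta> - pdelta \<delta>)"
    using assms p by (intro powr_less_mono2) auto
  hence "\<delta> * t powr (\<delta> - pdelta \<delta>) < pdelta \<delta>" using tm_pow d1 by (simp add: field_simps)
  thus ?thesis using assms by (simp add: deriv_factor)
qed

lemma deriv_neg: assumes "tm < t"
  shows "pdelta \<delta> * t powr (pdelta \<delta> - 1) - \<delta> * t powr (\<delta> - 1) < 0"
proof -
  have p: "0 < pdelta \<delta>" "pdelta \<delta> < \<delta>" using p_pos[OF d1 dP] p_lt[OF d1] by auto
  have "t powr (\<delta> - pdelta \<delta>) > tm powr (\<delta> - pdelta \<delta>)"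
    using assms p tm_pos by (intro powr_less_mono2) auto
  hence "\<delta> * t powr (\<delta> - pdelta \<delta>) > pdelta \<delta>" using tm_pow d1 by (simp add: field_simps)
  moreover have "t > 0" using assms tm_pos by auto
  ultimately show ?thesis by (simp add: deriv_factor mult_pos_neg)
qed

lemma FF_inc: assumes "0 < x" "x < y" "y \<le> tm" shows "FF \<delta> x < FF \<delta> y"
proof (rule DERIV_pos_imp_increasing_open[OF assms(2)])
  fix z assume z: "x < z" "z < y"
  hence "0 < z" "z < tm" using assms by auto
  thus "\<exists>d. (FF \<delta> has_real_derivative d) (at z) \<and> d > 0"
    using FF_deriv deriv_pos by blast
next
  show "continuous_on {x..y} (FF \<delta>)" using FF_cont assms(1) by blast
qed

lemma FF_dec: assumes "tm \<le> x" "x < y" shows "FF \<delta> y < FF \<delta> x"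
proof (rule DERIV_neg_imp_decreasing_open[OF assms(2)])
  fix z assume z: "x < z" "z < y"
  hence "0 < z" "tm < z" using assms tm_pos by auto
  thus "\<exists>d. (FF \<delta> has_real_derivative d) (at z) \<and> d < 0"
    using FF_deriv deriv_neg by blast
next
  show "continuous_on {x..y} (FF \<delta>)" using FF_cont assms(1) tm_pos by force
qed

lemma FF_le_max: assumes "0 < x" shows "FF \<delta> x \<le> FF \<delta> tm"
  using FF_inc[OF assms, of tm] FF_dec[of tm x]
  by (cases x tm rule: linorder_cases) auto

lemma MF_eq: "MF \<delta> = FF \<delta> tm"
  unfolding MF_def
  by (rule cSup_eq_maximum) (use tm_pos tm_lt1 FF_le_max in auto)

lemma FF_small: assumes "0 < L" shows "\<exists>t. 0 < t \<and> t < tm \<and> FF \<delta> t < L"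
proof -
  have p: "0 < pdelta \<delta>" using p_pos[OF d1 dP] by auto
  define t where "t = min (tm/2) ((L/2) powr (1/pdelta \<delta>))"
  have t0: "0 < t" using tm_pos assms unfolding t_def by auto
  have "t powr pdelta \<delta> \<le> ((L/2) powr (1/pdelta \<delta>)) powr pdelta \<delta>"
    using t0 p unfolding t_def by (intro powr_mono2) auto
  also have "\<dots> = L/2" using p assms by (simp add: powr_powr)
  finally have "t powr pdelta \<delta> \<le> L/2" .
  moreover have "t powr \<delta> > 0" using t0 by simp
  ultimately have "FF \<delta> t < L" using assms unfolding FF_def by linarith
  moreover have "t < tm" using tm_pos unfolding t_def by auto
  ultimately show ?thesis using t0 by blast
qed

lemma level: assumes "0 < L" "L < FF \<delta> tm"
  shows "\<exists>l r. 0 < l \<and> l < tm \<and> tm < r \<and> r < 1 \<and> FF \<delta> l = L \<and> FF \<delta> r = L \<and>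
     (\<forall>t. 0 < t \<and> t \<le> 1 \<longrightarrow> (FF \<delta> t < L \<longleftrightarrow> t < l \<or> r < t) \<and> (FF \<delta> t = L \<longleftrightarrow> t = l \<or> t = r))"
proof -
  obtain t0 where t0: "0 < t0" "t0 < tm" "FF \<delta> t0 < L" using FF_small assms by blast
  obtain l where l: "l \<ge> t0" "l \<le> tm" "FF \<delta> l = L"
    using IVT'[of "FF \<delta>" t0 L tm, OF _ _ _ FF_cont[OF t0(1)]] t0 assms by auto
  have ltm: "l < tm" using l assms by (cases "l = tm") auto
  obtain r where r: "r \<ge> tm" "r \<le> 1" "FF \<delta> r = L"
    using IVT2'[of "FF \<delta>" 1 L tm, OF _ _ _ FF_cont[OF tm_pos]] assms tm_lt1 FF_1 by auto
  have rtm: "tm < r" using r assms by (cases "r = tm") auto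
  have r1: "r < 1" using r assms FF_1 by (cases "r = 1") auto
  have "(FF \<delta> t < L \<longleftrightarrow> t < l \<or> r < t) \<and> (FF \<delta> t = L \<longleftrightarrow> t = l \<or> t = r)"
    if t: "0 < t" "t \<le> 1" for t
  proof (cases "t \<le> tm")
    case True
    have a: "FF \<delta> t < FF \<delta> l" if "t < l" using FF_inc[OF t(1) that l(2)] .
    have b: "FF \<delta> l < FF \<delta> t" if "l < t" using FF_inc[of l t] that t0(1) l(1) True by linarith
    have "t < l \<or> t = l \<or> l < t" by linarith
    thus ?thesis using a b l(3) True rtm by (elim disjE) auto
  next
    case False
    have a: "FF \<delta> t < FF \<delta> r" if "r < t" using FF_dec[of r t] that r(1) by linarith
    have b: "FF \<delta> r < FF \<delta> t" if "t < r" using FF_dec[of t r] that False by linarith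
    have "t < r \<or> t = r \<or> r < t" by linarith
    thus ?thesis using a b r(3) False ltm by (elim disjE) auto
  qed
  hence "\<forall>t. 0 < t \<and> t \<le> 1 \<longrightarrow> (FF \<delta> t < L \<longleftrightarrow> t < l \<or> r < t) \<and> (FF \<delta> t = L \<longleftrightarrow> t = l \<or> t = r)"
    by blast
  moreover have "0 < l" using t0 l by linarith
  ultimately show ?thesis using ltm rtm r1 r(3) l(3) by blast
qed

end


context
  fixes \<delta> :: real
  assumes d1: "1 < \<delta>" and dP: "Phi < \<delta>"
begin

lemma FF_dec2: assumes "0 < x" "x < y" shows "FF \<delta> y < FF \<delta> x"
proof (rule DERIV_neg_imp_decreasing_open[OF assms(2)])
  fix z assume z: "x < z" "z < y"
  hence z0: "0 < z" using assms by auto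
  have "pdelta \<delta> - \<delta> * z powr (\<delta> - pdelta \<delta>) < 0"
    using p_neg[OF d1 dP] d1 z0 by (smt (verit) mult_pos_pos powr_gt_zero)
  hence "pdelta \<delta> * z powr (pdelta \<delta> - 1) - \<delta> * z powr (\<delta> - 1) < 0"
    using z0 by (simp add: deriv_factor mult_pos_neg)
  thus "\<exists>d. (FF \<delta> has_real_derivative d) (at z) \<and> d < 0"
    using FF_deriv z0 by blast
next
  show "continuous_on {x..y} (FF \<delta>)" using FF_cont assms(1) by blast
qed

lemma FF_big: assumes "0 < L" shows "\<exists>t. 0 < t \<and> t < 1 \<and> FF \<delta> t > L"
proof -
  have p: "pdelta \<delta> < 0" using p_neg[OF d1 dP] by auto
  define t where "t = min (1/2) ((L+2) powr (1/pdelta \<delta>))"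
  have t0: "0 < t" using assms unfolding t_def by auto
  have t1: "t < 1" unfolding t_def by auto
  have "t powr pdelta \<delta> \<ge> ((L+2) powr (1/pdelta \<delta>)) powr pdelta \<delta>"
    using t0 p unfolding t_def by (intro powr_mono2') auto
  also have "((L+2) powr (1/pdelta \<delta>)) powr pdelta \<delta> = L+2" using p assms by (simp add: powr_powr)
  finally have a: "t powr pdelta \<delta> \<ge> L+2" .
  have "t powr \<delta> \<le> 1 powr \<delta>" using t0 t1 d1 by (intro powr_mono2) auto
  hence "t powr \<delta> \<le> 1" by simp
  hence "FF \<delta> t > L" using a unfolding FF_def by linarith
  thus ?thesis using t0 t1 by blast
qed

lemma level2: assumes "0 < L"
  shows "\<exists>b. 0 < b \<and> b < 1 \<and> FF \<delta> b = L \<and>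
     (\<forall>t. 0 < t \<and> t \<le> 1 \<longrightarrow> (FF \<delta> t < L \<longleftrightarrow> b < t) \<and> (FF \<delta> t = L \<longleftrightarrow> t = b))"
proof -
  obtain t0 where t0: "0 < t0" "t0 < 1" "FF \<delta> t0 > L" using FF_big assms by blast
  obtain b where b: "b \<ge> t0" "b \<le> 1" "FF \<delta> b = L"
    using IVT2'[of "FF \<delta>" 1 L t0, OF _ _ _ FF_cont[OF t0(1)]] assms t0 FF_1 by auto
  have b1: "b < 1" using b assms FF_1 by (cases "b = 1") auto
  have "(FF \<delta> t < L \<longleftrightarrow> b < t) \<and> (FF \<delta> t = L \<longleftrightarrow> t = b)"
    if t: "0 < t" "t \<le> 1" for t
  proof -
    have a: "FF \<delta> t < FF \<delta> b" if "b < t" using FF_dec2[of b t] that b(1) t0(1) by linarith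
    have c: "FF \<delta> b < FF \<delta> t" if "t < b" using FF_dec2[of t b] that t(1) by linarith
    have "t < b \<or> t = b \<or> b < t" by linarith
    thus ?thesis using a c b(3) by (elim disjE) auto
  qed
  hence "\<forall>t. 0 < t \<and> t \<le> 1 \<longrightarrow> (FF \<delta> t < L \<longleftrightarrow> b < t) \<and> (FF \<delta> t = L \<longleftrightarrow> t = b)"
    by blast
  moreover have "0 < b" using t0 b by linarith
  ultimately show ?thesis using b1 b(3) by blast
qed

end

lemma g_zero_iff: assumes "0 < \<tau>"
  shows "gfun \<delta> \<gamma> k \<tau> s = 0 \<longleftrightarrow> \<gamma>*(1+k* sin s) = FF \<delta> \<tau>"
proof -
  have e1: "\<tau> powr (\<delta>^2) = \<tau> powr (\<delta>^2-\<delta>) * \<tau> powr \<delta>"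
    using assms by (simp add: powr_add[symmetric])
  have e2: "\<tau> = \<tau> powr (\<delta>^2-\<delta>) * \<tau> powr pdelta \<delta>"
    using assms by (simp add: powr_add[symmetric] pdelta_def)
  have "gfun \<delta> \<gamma> k \<tau> s = \<tau> powr (\<delta>^2-\<delta>) * (\<gamma>*(1+k* sin s) - FF \<delta> \<tau>)"
    unfolding gfun_def FF_def by (subst e1, subst (3) e2) (simp add: algebra_simps)
  moreover have "\<tau> powr (\<delta>^2-\<delta>) > 0" using assms by simp
  ultimately show ?thesis by simp
qed

lemma norm1_cis: assumes "norm z = 1" shows "z = cis (Arg z)"
proof -
  have "z \<noteq> 0" using assms by auto
  hence "cis (Arg z) = sgn z" by (rule cis_Arg)
  thus ?thesis using assms by (simp add: sgn_div_norm)
qed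

lemma Zset_eq: "Zset \<delta> \<gamma> k = {(\<tau>,z). 0<\<tau> \<and> \<tau>\<le>1 \<and> norm z = 1 \<and> \<gamma>*(1+k*Im z) = FF \<delta> \<tau>}"
proof (intro set_eqI iffI)
  fix x assume "x \<in> Zset \<delta> \<gamma> k"
  then obtain \<tau> s where "x = (\<tau>, cis s)" "0 < \<tau>" "\<tau> \<le> 1" "gfun \<delta> \<gamma> k \<tau> s = 0"
    unfolding Zset_def by blast
  thus "x \<in> {(\<tau>,z). 0<\<tau> \<and> \<tau>\<le>1 \<and> norm z = 1 \<and> \<gamma>*(1+k*Im z) = FF \<delta> \<tau>}"
    using g_zero_iff by auto
next
  fix x assume "x \<in> {(\<tau>,z). 0<\<tau> \<and> \<tau>\<le>1 \<and> norm z = 1 \<and> \<gamma>*(1+k*Im z) = FF \<delta> \<tau>}"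
  then obtain \<tau> z where x: "x = (\<tau>, z)" "0 < \<tau>" "\<tau> \<le> 1" "norm z = 1" "\<gamma>*(1+k*Im z) = FF \<delta> \<tau>"
    by blast
  have z: "z = cis (Arg z)" using norm1_cis x(4) .
  have "Im z = Im (cis (Arg z))" using arg_cong[OF z, of Im] .
  hence "Im z = sin (Arg z)" by simp
  hence "gfun \<delta> \<gamma> k \<tau> (Arg z) = 0" using g_zero_iff[OF x(2)] x(5) by simp
  thus "x \<in> Zset \<delta> \<gamma> k" unfolding Zset_def using x z by blast
qed

lemma fibre_eq: "fibre \<delta> \<gamma> k \<tau> = {z. 0<\<tau> \<and> \<tau>\<le>1 \<and> norm z = 1 \<and> \<gamma>*(1+k*Im z) = FF \<delta> \<tau>}"
  unfolding fibre_def Zset_eq by simp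

lemma norm1_iff: "norm (z::complex) = 1 \<longleftrightarrow> (Re z)^2 + (Im z)^2 = 1"
  by (metis cmod_power2 norm_ge_zero power_one real_sqrt_unique real_sqrt_one)

lemma lvl2: assumes "\<bar>y\<bar> < 1" shows "card {z::complex. norm z = 1 \<and> Im z = y} = 2"
proof -
  define w where "w = sqrt (1 - y^2)"
  have w0: "w > 0" unfolding w_def using assms by (simp add: abs_square_less_1)
  have ww: "w^2 = 1 - y^2" unfolding w_def using assms by (simp add: abs_square_less_1 less_imp_le)
  have "{z::complex. norm z = 1 \<and> Im z = y} = {Complex w y, Complex (-w) y}"
  proof (intro set_eqI iffI)
    fix z :: complex assume "z \<in> {z. norm z = 1 \<and> Im z = y}"
    hence "(Re z)^2 = w^2" "Im z = y" using ww norm1_iff by auto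
    hence "Re z = w \<or> Re z = -w" "Im z = y" using power2_eq_iff by blast+
    thus "z \<in> {Complex w y, Complex (-w) y}" by (auto simp: complex_eq_iff)
  next
    fix z :: complex assume "z \<in> {Complex w y, Complex (-w) y}"
    thus "z \<in> {z. norm z = 1 \<and> Im z = y}" using ww by (auto simp: norm1_iff)
  qed
  moreover have "Complex w y \<noteq> Complex (-w) y" using w0 by simp
  ultimately show ?thesis by simp
qed

lemma lvl_top: "{z::complex. norm z = 1 \<and> Im z = 1} = {\<i>}"
proof (intro set_eqI iffI)
  fix z :: complex assume "z \<in> {z. norm z = 1 \<and> Im z = 1}"
  hence "(Re z)^2 = 0" "Im z = 1" using norm1_iff by auto
  thus "z \<in> {\<i>}" by (simp add: complex_eq_iff)
qed (simp add: norm1_iff)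

lemma lvl_bot: "{z::complex. norm z = 1 \<and> Im z = -1} = {-\<i>}"
proof (intro set_eqI iffI)
  fix z :: complex assume "z \<in> {z. norm z = 1 \<and> Im z = -1}"
  hence "(Re z)^2 = 0" "Im z = -1" using norm1_iff by auto
  thus "z \<in> {-\<i>}" by (simp add: complex_eq_iff)
qed (simp add: norm1_iff)

lemma lvl_out: assumes "\<bar>y\<bar> > 1" shows "{z::complex. norm z = 1 \<and> Im z = y} = {}"
proof -
  { fix z :: complex assume "norm z = 1" "Im z = y"
    hence False using abs_Im_le_cmod[of z] assms by simp }
  thus ?thesis by blast
qed

lemma cis_3pi2: "cis (3*pi/2) = -\<i>"
proof -
  have e: "3*pi/2 = pi/2 + pi" by simp
  have "cos (3*pi/2) = 0" by (simp only: e cos_periodic_pi cos_pi_half minus_zero)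
  moreover have "sin (3*pi/2) = -1" by (simp only: e sin_periodic_pi sin_pi_half)
  ultimately show ?thesis by (simp add: complex_eq_iff)
qed

lemma cis_pi2: "cis (pi/2) = \<i>"
  by (simp add: complex_eq_iff)

context
  fixes \<delta> \<gamma> k :: real
  assumes g0: "0 < \<gamma>" and k0: "0 < k"
begin

lemma fib_level: assumes "0 < \<tau>" "\<tau> \<le> 1"
  shows "fibre \<delta> \<gamma> k \<tau> = {z. norm z = 1 \<and> Im z = (FF \<delta> \<tau> / \<gamma> - 1) / k}"
proof -
  have "\<gamma>*(1+k*y) = FF \<delta> \<tau> \<longleftrightarrow> y = (FF \<delta> \<tau> / \<gamma> - 1) / k" for y
    using g0 k0 by (auto simp: field_simps)
  thus ?thesis unfolding fibre_eq using assms by auto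
qed

lemma fib_out: "\<not> (0 < \<tau> \<and> \<tau> \<le> 1) \<Longrightarrow> fibre \<delta> \<gamma> k \<tau> = {}"
  unfolding fibre_eq by auto

lemma fib_bot: assumes "0 < \<tau>" "\<tau> \<le> 1" "FF \<delta> \<tau> = \<gamma>*(1-k)" shows "fibre \<delta> \<gamma> k \<tau> = {-\<i>}"
proof -
  have y: "(FF \<delta> \<tau> / \<gamma> - 1) / k = -1" using assms(3) g0 k0 by (simp add: field_simps)
  show ?thesis unfolding fib_level[OF assms(1,2)] y lvl_bot ..
qed

lemma fib_top: assumes "0 < \<tau>" "\<tau> \<le> 1" "FF \<delta> \<tau> = \<gamma>*(1+k)" shows "fibre \<delta> \<gamma> k \<tau> = {\<i>}"
proof -
  have y: "(FF \<delta> \<tau> / \<gamma> - 1) / k = 1" using assms(3) g0 k0 by (simp add: field_simps)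
  show ?thesis unfolding fib_level[OF assms(1,2)] y lvl_top ..
qed

lemma fib_two: assumes "0 < \<tau>" "\<tau> \<le> 1" "\<gamma>*(1-k) < FF \<delta> \<tau>" "FF \<delta> \<tau> < \<gamma>*(1+k)"
  shows "card (fibre \<delta> \<gamma> k \<tau>) = 2"
proof -
  have "-1 < (FF \<delta> \<tau> / \<gamma> - 1) / k" "(FF \<delta> \<tau> / \<gamma> - 1) / k < 1"
    using assms(3,4) g0 k0 by (simp_all add: field_simps)
  hence "\<bar>(FF \<delta> \<tau> / \<gamma> - 1) / k\<bar> < 1" by linarith
  thus ?thesis unfolding fib_level[OF assms(1,2)] by (rule lvl2)
qed

lemma fib_empty: assumes "0 < \<tau>" "\<tau> \<le> 1" "FF \<delta> \<tau> < \<gamma>*(1-k) \<or> FF \<delta> \<tau> > \<gamma>*(1+k)"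
  shows "fibre \<delta> \<gamma> k \<tau> = {}"
proof -
  have "(FF \<delta> \<tau> / \<gamma> - 1) / k < -1 \<or> (FF \<delta> \<tau> / \<gamma> - 1) / k > 1"
    using assms(3) g0 k0 by (auto simp: field_simps)
  hence "\<bar>(FF \<delta> \<tau> / \<gamma> - 1) / k\<bar> > 1" by linarith
  thus ?thesis unfolding fib_level[OF assms(1,2)] by (rule lvl_out)
qed

lemma fold_pt: assumes "0 < \<tau>" "\<tau> \<le> 1" "cos s = 0" "\<gamma>*(1+k* sin s) = FF \<delta> \<tau>"
  shows "fold_point \<delta> \<gamma> k \<tau> s"
proof -
  have "((\<lambda>s. gfun \<delta> \<gamma> k \<tau> s) has_real_derivative (\<gamma> * \<tau> powr (\<delta>^2 - \<delta>) * (k * cos s))) (at s)"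
    unfolding gfun_def by (auto intro!: derivative_eq_intros)
  thus ?thesis unfolding fold_point_def using assms g_zero_iff by auto
qed

end


lemma inside_sphere01: "inside (sphere (0::complex) 1) = ball 0 1"
  using inside_frontier_eq_interior[of "cball (0::complex) 1"] by simp

lemma cont_snd: "continuous_on S snd"
  using continuous_on_snd[OF continuous_on_id, of S] by simp

lemma noncontr:
  assumes A: "A \<subseteq> cyl" and inj: "inj_on snd A" and im: "snd ` A = sphere 0 1"
  shows "curve_noncontractible_in cyl A"
  unfolding curve_noncontractible_in_def
proof (intro allI impI notI)
  fix p assume sp: "simple_loop p \<and> path_image p = A" and c: "contractible_loop_in cyl p"
  from c obtain a where h: "homotopic_loops cyl p (\<lambda>_. a)" unfolding contractible_loop_in_def by blast
  have spp: "simple_path p" and lp: "pathfinish p = pathstart p" and ip: "path_image p = A"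
    using sp unfolding simple_loop_def by auto
  have sq: "simple_path (snd \<circ> p)" using simple_path_continuous_image[OF spp cont_snd] inj ip by simp
  have iq: "path_image (snd \<circ> p) = sphere 0 1" using ip im by (simp add: path_image_compose)
  have fs: "snd \<in> cyl \<rightarrow> snd ` cyl" by blast
  have h1: "homotopic_loops (snd ` cyl) (snd \<circ> p) (snd \<circ> (\<lambda>_. a))"
    by (rule homotopic_loops_continuous_image[OF h cont_snd fs])
  have e: "snd \<circ> (\<lambda>_. a) = (\<lambda>_. snd a)" by (simp add: o_def)
  have sub: "snd ` cyl \<subseteq> -{0}" by (auto simp: cyl_def)
  have h2: "homotopic_loops (-{0}) (snd \<circ> p) (\<lambda>_. snd a)"
    using homotopic_loops_subset[OF h1 sub] unfolding e .
  have pq: "path (snd \<circ> p)" using sq by (simp add: simple_path_def)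
  have z: "(0::complex) \<notin> path_image (snd \<circ> p)" unfolding iq by simp
  have "winding_number (snd \<circ> p) 0 = 0"
    using winding_number_homotopic_loops_null_eq[OF pq z] h2 by blast
  moreover have "norm (winding_number (snd \<circ> p) 0) = 1"
    by (rule simple_closed_path_norm_winding_number_inside[OF sq]) (simp add: iq inside_sphere01)
  ultimately show False by simp
qed

lemma graph_curve:
  fixes c :: "real \<Rightarrow> real"
  assumes ab: "0 < a" "a < b" "b \<le> 1" and cc: "continuous_on {a..b} c"
    and inj: "inj_on c {a..b}" and im: "c ` {a..b} = {-1..1}"
  shows "simple_closed_curve {(\<tau>,z). a \<le> \<tau> \<and> \<tau> \<le> b \<and> norm z = 1 \<and> Im z = c \<tau>} \<and>
         curve_noncontractible_in cyl {(\<tau>,z). a \<le> \<tau> \<and> \<tau> \<le> b \<and> norm z = 1 \<and> Im z = c \<tau>}"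
proof -
  define A where "A = {(\<tau>,z). a \<le> \<tau> \<and> \<tau> \<le> b \<and> norm z = 1 \<and> Im z = c \<tau>}"
  define \<sigma> where "\<sigma> = inv_into {a..b} c"
  have \<sigma>2: "\<sigma> (c x) = x" if "x \<in> {a..b}" for x using inv_into_f_f[OF inj that] unfolding \<sigma>_def .
  have \<sigma>c: "continuous_on {-1..1} \<sigma>"
    using continuous_on_inv[OF cc compact_Icc, of \<sigma>] im \<sigma>2 by auto
  have \<sigma>1: "\<sigma> y \<in> {a..b}" "c (\<sigma> y) = y" if "y \<in> {-1..1}" for y
    using that im inv_into_into[of y c "{a..b}"] f_inv_into_f[of y c "{a..b}"] unfolding \<sigma>_def by auto
  define f where "f = (\<lambda>z::complex. (\<sigma> (Im z), z))"
  have imIm: "Im z \<in> {-1..1}" if "norm z = 1" for z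
    using abs_Im_le_cmod[of z] that by (simp add: abs_le_iff)
  have Aeq: "A = f ` sphere 0 1"
  proof (intro set_eqI iffI)
    fix x assume "x \<in> A"
    then obtain \<tau> z where x: "x = (\<tau>,z)" "a \<le> \<tau>" "\<tau> \<le> b" "norm z = 1" "Im z = c \<tau>"
      unfolding A_def by blast
    hence "\<sigma> (Im z) = \<tau>" using \<sigma>2 by auto
    thus "x \<in> f ` sphere 0 1" using x unfolding f_def by (auto intro!: image_eqI[of _ _ z])
  next
    fix x assume "x \<in> f ` sphere 0 1"
    then obtain z where "x = f z" "norm z = 1" by auto
    thus "x \<in> A" using \<sigma>1[OF imIm] unfolding A_def f_def by auto
  qed
  have imsub: "Im ` sphere 0 1 \<subseteq> {-1..1}" using imIm by auto
  have c1: "continuous_on (sphere 0 1) (\<lambda>z::complex. \<sigma> (Im z))"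
    by (rule continuous_on_compose2[OF \<sigma>c linear_continuous_on[OF bounded_linear_Im] imsub])
  have fc: "continuous_on (sphere 0 1) f" unfolding f_def
    by (intro continuous_on_Pair c1 continuous_on_id)
  have finj: "inj_on f (sphere 0 1)" unfolding f_def inj_on_def by auto
  define P where "P = f \<circ> circlepath 0 1"
  have sP: "simple_path P" unfolding P_def
    using simple_path_continuous_image[of "circlepath 0 1" f] simple_path_circlepath fc finj by simp
  have lP: "pathfinish P = pathstart P" unfolding P_def by (simp add: pathfinish_compose pathstart_compose)
  have iP: "path_image P = A" unfolding P_def Aeq by (simp add: path_image_compose)
  have "simple_closed_curve A" unfolding simple_closed_curve_def simple_loop_def using sP lP iP by blast
  moreover have "curve_noncontractible_in cyl A"
  proof (rule noncontr)
    show "A \<subseteq> cyl" unfolding A_def cyl_def using ab by auto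
    show "inj_on snd A" unfolding Aeq f_def inj_on_def by auto
    show "snd ` A = sphere 0 1" unfolding Aeq f_def by (simp add: image_image)
  qed
  ultimately show ?thesis unfolding A_def by blast
qed

lemma contr:
  assumes A: "A \<subseteq> {(\<tau>,z). 0 < \<tau> \<and> \<tau> \<le> 1 \<and> norm z = 1 \<and> z \<noteq> \<i>}"
  shows "curve_contractible_in cyl A"
  unfolding curve_contractible_in_def contractible_loop_in_def
proof (intro allI impI)
  fix p assume sp: "simple_loop p \<and> path_image p = A"
  have pp: "path p" and lp: "pathfinish p = pathstart p" and ip: "path_image p = A"
    using sp unfolding simple_loop_def simple_path_def by auto
  have pA: "p t \<in> A" if "t \<in> {0..1}" for t using ip that unfolding path_image_def by auto
  define h where "h = (\<lambda>x::real\<times>real. ((1 - fst x) * fst (p (snd x)) + fst x,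
       sgn (of_real (1 - fst x) * snd (p (snd x)) - of_real (fst x) * \<i>)))"
  have nz: "of_real (1-u) * snd (p t) - of_real u * \<i> \<noteq> 0" if "u \<in> {0..1}" "t \<in> {0..1}" for u t
  proof
    assume e: "of_real (1-u) * snd (p t) - of_real u * \<i> = 0"
    have w: "norm (snd (p t)) = 1" "snd (p t) \<noteq> \<i>" using pA[OF that(2)] A by auto
    from e have e2: "of_real (1-u) * snd (p t) = of_real u * \<i>" by simp
    hence "norm (of_real (1-u) * snd (p t)) = norm (of_real u * \<i>)" by simp
    moreover have "norm (of_real (1-u) * snd (p t)) = 1 - u"
      using that w by (simp only: norm_mult norm_of_real) simp
    moreover have "norm (of_real u * \<i>) = u"
      using that by (simp only: norm_mult norm_of_real) simp
    ultimately have "1 - u = u" by simp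
    hence u: "u = 1/2" by simp
    with e2 have "snd (p t) = \<i>" by simp
    with w show False by simp
  qed
  have pc: "continuous_on ({0..1}\<times>{0..1}) (\<lambda>x::real\<times>real. p (snd x))"
    by (rule continuous_on_compose2[OF pp[unfolded path_def] cont_snd]) auto
  have "homotopic_loops cyl p (\<lambda>_. (1, -\<i>))"
    unfolding homotopic_loops
  proof (intro exI[of _ h] conjI ballI)
    show "continuous_on ({0..1}\<times>{0..1}) h" unfolding h_def
      by (intro continuous_intros pc) (use nz in auto)
    show "h \<in> {0..1}\<times>{0..1} \<rightarrow> cyl"
    proof
      fix x :: "real\<times>real" assume x: "x \<in> {0..1}\<times>{0..1}"
      obtain u t where ut: "x = (u,t)" by (cases x)
      have u: "0 \<le> u" "u \<le> 1" and t: "t \<in> {0..1}" using x ut by auto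
      have a: "0 < fst (p t)" "fst (p t) \<le> 1" using pA[OF t] A by auto
      have "(1-u) * fst (p t) \<ge> 0" using u a by simp
      moreover have "(1-u) * fst (p t) \<le> (1-u)" using u a by (simp add: mult_left_le)
      moreover have "u = 0 \<longrightarrow> (1-u) * fst (p t) > 0" using a by simp
      ultimately have "0 < (1-u) * fst (p t) + u" "(1-u) * fst (p t) + u \<le> 1" using u by linarith+
      moreover have "norm (sgn (of_real (1 - u) * snd (p t) - of_real u * \<i>)) = 1"
        using nz[of u t] u t by (simp add: norm_sgn)
      ultimately show "h x \<in> cyl" unfolding h_def cyl_def ut by simp
    qed
    fix x :: real assume x: "x \<in> {0..1}"
    have "norm (snd (p x)) = 1" using pA[OF x] A by auto
    thus "h (0, x) = p x" unfolding h_def by (simp add: sgn_div_norm)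
  next
    fix x :: real assume x: "x \<in> {0..1}"
    show "h (1, x) = (1, -\<i>)" unfolding h_def by (simp add: sgn_div_norm)
  next
    fix t :: real assume "t \<in> {0..1}"
    have "p 1 = p 0" using lp unfolding pathfinish_def pathstart_def .
    thus "pathfinish (h \<circ> Pair t) = pathstart (h \<circ> Pair t)"
      unfolding h_def pathfinish_def pathstart_def by simp
  qed
  thus "\<exists>a. homotopic_loops cyl p (\<lambda>_. a)" by blast
qed


lemma norm1_iffX: "norm (z::complex) = 1 \<longleftrightarrow> (Re z)^2 + (Im z)^2 = 1"
  by (metis cmod_power2 norm_ge_zero power_one real_sqrt_unique real_sqrt_one)

lemma X_curve:
  fixes c :: "real \<Rightarrow> real"
  assumes ab: "0 < a" "a < b" and cc: "continuous_on {a..b} c"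
    and ca: "c a = -1" and cb: "c b = -1" and cin: "\<And>\<tau>. a < \<tau> \<Longrightarrow> \<tau> < b \<Longrightarrow> -1 < c \<tau>"
    and cup: "\<And>\<tau>. a \<le> \<tau> \<Longrightarrow> \<tau> \<le> b \<Longrightarrow> c \<tau> < 1"
  shows "simple_closed_curve {(\<tau>,z). a \<le> \<tau> \<and> \<tau> \<le> b \<and> norm z = 1 \<and> Im z = c \<tau>}"
proof -
  define A where "A = {(\<tau>,z). a \<le> \<tau> \<and> \<tau> \<le> b \<and> norm z = 1 \<and> Im z = c \<tau>}"
  define s where "s = (\<lambda>\<tau>. sqrt (1 - (c \<tau>)^2))"
  define fp where "fp = (\<lambda>\<tau>. (\<tau>, complex_of_real (s \<tau>) + \<i> * complex_of_real (c \<tau>)))"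
  define fm where "fm = (\<lambda>\<tau>. (\<tau>, complex_of_real (- s \<tau>) + \<i> * complex_of_real (c \<tau>)))"
  define g1 where "g1 = fp \<circ> linepath a b"
  define g2 where "g2 = fm \<circ> linepath b a"
  have cle: "-1 \<le> c \<tau> \<and> c \<tau> \<le> 1" if "a \<le> \<tau>" "\<tau> \<le> b" for \<tau>
    using cin[of \<tau>] cup[of \<tau>] that ca cb by (cases "\<tau> = a"; cases "\<tau> = b") auto
  have seg1: "closed_segment a b = {a..b}" and seg2: "closed_segment b a = {a..b}"
    using ab by (auto simp: closed_segment_eq_real_ivl)
  have sc: "continuous_on {a..b} s" unfolding s_def by (intro continuous_intros cc)
  have fpc: "continuous_on {a..b} fp" unfolding fp_def by (intro continuous_intros sc cc)
  have fmc: "continuous_on {a..b} fm" unfolding fm_def by (intro continuous_intros sc cc)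
  have la: "arc (linepath a b)" "arc (linepath b a)" using ab by auto
  have p1: "path g1" unfolding g1_def by (rule path_continuous_image) (simp_all add: seg1 fpc)
  have p2: "path g2" unfolding g2_def by (rule path_continuous_image) (simp_all add: seg2 fmc)
  have inj1: "inj_on g1 {0..1}" using la(1) unfolding arc_def inj_on_def g1_def fp_def by auto
  have inj2: "inj_on g2 {0..1}" using la(2) unfolding arc_def inj_on_def g2_def fm_def by auto
  have a1: "arc g1" "arc g2" using p1 p2 inj1 inj2 by (auto simp: arc_def)
  have i1: "path_image g1 = fp ` {a..b}" unfolding g1_def by (simp add: path_image_compose seg1)
  have i2: "path_image g2 = fm ` {a..b}" unfolding g2_def by (simp add: path_image_compose seg2)
  have sa: "s a = 0" "s b = 0" unfolding s_def using ca cb by auto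
  have s0: "\<tau> = a \<or> \<tau> = b" if "a \<le> \<tau>" "\<tau> \<le> b" "s \<tau> = 0" for \<tau>
  proof -
    have "1 - (c \<tau>)^2 \<ge> 0" using cle[OF that(1,2)] by (simp add: abs_square_le_1 abs_le_iff)
    hence "1 - (c \<tau>)^2 = 0" using that(3) unfolding s_def by simp
    hence "c \<tau> = 1 \<or> c \<tau> = -1" by (simp add: power2_eq_1_iff)
    hence "c \<tau> = -1" using cup[OF that(1,2)] by auto
    thus ?thesis using cin[of \<tau>] that(1,2) by fastforce
  qed
  have ssq: "(s \<tau>)^2 = 1 - (c \<tau>)^2" "s \<tau> \<ge> 0" if "a \<le> \<tau>" "\<tau> \<le> b" for \<tau>
    using cle[OF that] unfolding s_def by (simp_all add: abs_square_le_1 abs_le_iff)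
  have st1: "pathstart g1 = fp a" "pathfinish g1 = fp b" unfolding g1_def
    by (simp_all add: pathstart_compose pathfinish_compose)
  have st2: "pathstart g2 = fm b" "pathfinish g2 = fm a" unfolding g2_def
    by (simp_all add: pathstart_compose pathfinish_compose)
  have fpm: "fp a = fm a" "fp b = fm b" unfolding fp_def fm_def using sa by auto
  have int: "path_image g1 \<inter> path_image g2 \<subseteq> {pathstart g1, pathstart g2}"
  proof
    fix x assume "x \<in> path_image g1 \<inter> path_image g2"
    then obtain \<tau> \<tau>' where t: "\<tau> \<in> {a..b}" "\<tau>' \<in> {a..b}" "x = fp \<tau>" "x = fm \<tau>'"
      unfolding i1 i2 by blast
    hence "\<tau> = \<tau>'" "s \<tau> = - s \<tau>'" unfolding fp_def fm_def by (auto simp: complex_eq_iff)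
    hence "s \<tau> = 0" by simp
    hence "\<tau> = a \<or> \<tau> = b" using s0 t(1) by auto
    thus "x \<in> {pathstart g1, pathstart g2}" using t(3) st1 st2 fpm by auto
  qed
  have sp: "simple_path (g1 +++ g2)"
    by (rule simple_path_join_loop[OF a1]) (use st1 st2 fpm int in auto)
  have lp: "pathfinish (g1 +++ g2) = pathstart (g1 +++ g2)" using st1 st2 fpm by simp
  have "path_image (g1 +++ g2) = fp ` {a..b} \<union> fm ` {a..b}"
    using path_image_join[of g1 g2] st1 st2 fpm i1 i2 by simp
  also have "\<dots> = A"
  proof (intro set_eqI iffI)
    fix x assume "x \<in> fp ` {a..b} \<union> fm ` {a..b}"
    then obtain \<tau> where t: "\<tau> \<in> {a..b}" "x = fp \<tau> \<or> x = fm \<tau>" by blast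
    have "(s \<tau>)^2 + (c \<tau>)^2 = 1" using ssq t(1) by simp
    thus "x \<in> A" using t unfolding A_def fp_def fm_def by (auto simp: norm1_iffX)
  next
    fix x assume "x \<in> A"
    then obtain \<tau> z where x: "x = (\<tau>, z)" "a \<le> \<tau>" "\<tau> \<le> b" "norm z = 1" "Im z = c \<tau>"
      unfolding A_def by blast
    have "(Re z)^2 = (s \<tau>)^2" using ssq[OF x(2,3)] x(4,5) norm1_iffX by auto
    hence "Re z = s \<tau> \<or> Re z = - s \<tau>" using power2_eq_iff by blast
    hence "x = fp \<tau> \<or> x = fm \<tau>" unfolding fp_def fm_def x(1) using x(5)
      by (auto simp: complex_eq_iff)
    thus "x \<in> fp ` {a..b} \<union> fm ` {a..b}" using x(2,3) by auto
  qed
  finally have "path_image (g1 +++ g2) = A" .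
  thus ?thesis unfolding simple_closed_curve_def simple_loop_def A_def[symmetric]
    using sp lp by blast
qed


definition cf :: "real \<Rightarrow> real \<Rightarrow> real \<Rightarrow> real \<Rightarrow> real" where
  "cf \<delta> \<gamma> k \<tau> = (FF \<delta> \<tau> / \<gamma> - 1) / k"

lemma super_from:
  assumes "0 < \<epsilon>" "\<And>\<tau>. \<tau>0 < \<tau> \<Longrightarrow> \<tau> < \<tau>0 + \<epsilon> \<Longrightarrow> card (fibre \<delta> \<gamma> k \<tau>) = 2"
    "fibre \<delta> \<gamma> k \<tau>0 = {w}" "\<And>\<tau>. \<tau>0 - \<epsilon> < \<tau> \<Longrightarrow> \<tau> < \<tau>0 \<Longrightarrow> fibre \<delta> \<gamma> k \<tau> = {}"
  shows "supercritical \<delta> \<gamma> k \<tau>0 s0"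
proof -
  have e: "{z. (\<tau>, z) \<in> UNIV \<inter> Zset \<delta> \<gamma> k} = fibre \<delta> \<gamma> k \<tau>" for \<tau> unfolding fibre_def by simp
  show ?thesis unfolding supercritical_def
    by (rule exI[of _ UNIV], unfold e, intro conjI open_UNIV UNIV_I exI[of _ \<epsilon>] allI)
       (use assms in auto)
qed

lemma sub_from:
  assumes "0 < \<epsilon>" "\<And>\<tau>. \<tau>0 - \<epsilon> < \<tau> \<Longrightarrow> \<tau> < \<tau>0 \<Longrightarrow> card (fibre \<delta> \<gamma> k \<tau>) = 2"
    "fibre \<delta> \<gamma> k \<tau>0 = {w}" "\<And>\<tau>. \<tau>0 < \<tau> \<Longrightarrow> \<tau> < \<tau>0 + \<epsilon> \<Longrightarrow> fibre \<delta> \<gamma> k \<tau> = {}"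
  shows "subcritical \<delta> \<gamma> k \<tau>0 s0"
proof -
  have e: "{z. (\<tau>, z) \<in> UNIV \<inter> Zset \<delta> \<gamma> k} = fibre \<delta> \<gamma> k \<tau>" for \<tau> unfolding fibre_def by simp
  show ?thesis unfolding subcritical_def
    by (rule exI[of _ UNIV], unfold e, intro conjI open_UNIV UNIV_I exI[of _ \<epsilon>] allI)
       (use assms in auto)
qed

lemma graph_inc:
  fixes c :: "real \<Rightarrow> real"
  assumes ab: "0 < a" "a < b" "b \<le> 1" and cc: "continuous_on {a..b} c"
    and mono: "\<And>x y. a \<le> x \<Longrightarrow> x < y \<Longrightarrow> y \<le> b \<Longrightarrow> c x < c y"
    and ca: "c a = -1" and cb: "c b = 1"
  shows "simple_closed_curve {(\<tau>,z). a \<le> \<tau> \<and> \<tau> \<le> b \<and> norm z = 1 \<and> Im z = c \<tau>} \<and>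
         curve_noncontractible_in cyl {(\<tau>,z). a \<le> \<tau> \<and> \<tau> \<le> b \<and> norm z = 1 \<and> Im z = c \<tau>}"
proof (rule graph_curve[OF ab cc])
  show "inj_on c {a..b}"
  proof (rule inj_onI)
    fix x y assume "x \<in> {a..b}" "y \<in> {a..b}" "c x = c y"
    thus "x = y" using mono[of x y] mono[of y x] by (cases x y rule: linorder_cases) auto
  qed
  have le: "c a \<le> c t \<and> c t \<le> c b" if "t \<in> {a..b}" for t
    using mono[of a t] mono[of t b] that by (cases "t = a"; cases "t = b") auto
  show "c ` {a..b} = {-1..1}"
  proof
    show "c ` {a..b} \<subseteq> {-1..1}" using le ca cb by auto
    show "{-1..1} \<subseteq> c ` {a..b}"
    proof
      fix y :: real assume "y \<in> {-1..1}"
      then obtain x where "a \<le> x" "x \<le> b" "c x = y"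
        using IVT'[of c a y b, OF _ _ _ cc] ca cb ab by auto
      thus "y \<in> c ` {a..b}" by auto
    qed
  qed
qed

lemma graph_dec:
  fixes c :: "real \<Rightarrow> real"
  assumes ab: "0 < a" "a < b" "b \<le> 1" and cc: "continuous_on {a..b} c"
    and mono: "\<And>x y. a \<le> x \<Longrightarrow> x < y \<Longrightarrow> y \<le> b \<Longrightarrow> c y < c x"
    and ca: "c a = 1" and cb: "c b = -1"
  shows "simple_closed_curve {(\<tau>,z). a \<le> \<tau> \<and> \<tau> \<le> b \<and> norm z = 1 \<and> Im z = c \<tau>} \<and>
         curve_noncontractible_in cyl {(\<tau>,z). a \<le> \<tau> \<and> \<tau> \<le> b \<and> norm z = 1 \<and> Im z = c \<tau>}"
proof (rule graph_curve[OF ab cc])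
  show "inj_on c {a..b}"
  proof (rule inj_onI)
    fix x y assume "x \<in> {a..b}" "y \<in> {a..b}" "c x = c y"
    thus "x = y" using mono[of x y] mono[of y x] by (cases x y rule: linorder_cases) auto
  qed
  have le: "c b \<le> c t \<and> c t \<le> c a" if "t \<in> {a..b}" for t
    using mono[of a t] mono[of t b] that by (cases "t = a"; cases "t = b") auto
  show "c ` {a..b} = {-1..1}"
  proof
    show "c ` {a..b} \<subseteq> {-1..1}" using le ca cb by auto
    show "{-1..1} \<subseteq> c ` {a..b}"
    proof
      fix y :: real assume "y \<in> {-1..1}"
      then obtain x where "a \<le> x" "x \<le> b" "c x = y"
        using IVT2'[of c b y a, OF _ _ _ cc] ca cb ab by auto
      thus "y \<in> c ` {a..b}" by auto
    qed
  qed
qed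

lemma sincos_3pi2: "cos (3*pi/2) = 0" "sin (3*pi/2) = -1"
  using arg_cong[OF cis_3pi2, of Re] arg_cong[OF cis_3pi2, of Im] by simp_all

context
  fixes \<delta> \<gamma> k :: real
  assumes g0: "0 < \<gamma>" and k0: "0 < k"
begin

lemma Z_cf: "Zset \<delta> \<gamma> k = {(\<tau>,z). 0<\<tau> \<and> \<tau>\<le>1 \<and> norm z = 1 \<and> Im z = cf \<delta> \<gamma> k \<tau>}"
proof -
  have "\<gamma>*(1+k*y) = FF \<delta> \<tau> \<longleftrightarrow> y = cf \<delta> \<gamma> k \<tau>" for y \<tau>
    using g0 k0 by (auto simp: field_simps cf_def)
  thus ?thesis unfolding Zset_eq by auto
qed

lemma cf_FF: "FF \<delta> \<tau> = \<gamma> * (1 + k * cf \<delta> \<gamma> k \<tau>)"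
  using g0 k0 by (simp add: cf_def field_simps)

lemma cf_bounds: assumes "norm z = 1" "Im z = cf \<delta> \<gamma> k \<tau>"
  shows "\<gamma>*(1-k) \<le> FF \<delta> \<tau> \<and> FF \<delta> \<tau> \<le> \<gamma>*(1+k)"
proof -
  have "-1 \<le> Im z" "Im z \<le> 1" using abs_Im_le_cmod[of z] assms(1) by (simp_all add: abs_le_iff)
  hence "-(\<gamma>*k) \<le> \<gamma>*k*Im z" "\<gamma>*k*Im z \<le> \<gamma>*k" using g0 k0
    by (metis mult.right_neutral mult_left_mono mult_minus_right less_imp_le mult_pos_pos)+
  thus ?thesis unfolding cf_FF assms(2)[symmetric] by (simp add: algebra_simps)
qed

lemma cf_lt: "FF \<delta> x < FF \<delta> y \<Longrightarrow> cf \<delta> \<gamma> k x < cf \<delta> \<gamma> k y"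
  using g0 k0 by (simp add: cf_def field_simps)

lemma cf_m1: "FF \<delta> x = \<gamma>*(1-k) \<Longrightarrow> cf \<delta> \<gamma> k x = -1"
  using g0 k0 by (simp add: cf_def field_simps)

lemma cf_p1: "FF \<delta> x = \<gamma>*(1+k) \<Longrightarrow> cf \<delta> \<gamma> k x = 1"
  using g0 k0 by (simp add: cf_def field_simps)

lemma cf_gt_m1: "\<gamma>*(1-k) < FF \<delta> x \<Longrightarrow> -1 < cf \<delta> \<gamma> k x"
  using g0 k0 by (simp add: cf_def field_simps)

lemma cf_lt_1: "FF \<delta> x < \<gamma>*(1+k) \<Longrightarrow> cf \<delta> \<gamma> k x < 1"
  using g0 k0 by (simp add: cf_def field_simps)

lemma cf_one: "cf \<delta> \<gamma> k x = 1 \<Longrightarrow> FF \<delta> x = \<gamma>*(1+k)"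
  using cf_FF by simp

lemma cf_cont: "0 < a \<Longrightarrow> continuous_on {a..b} (cf \<delta> \<gamma> k)"
proof -
  assume a: "0 < a"
  have "cf \<delta> \<gamma> k = (\<lambda>t. (FF \<delta> t / \<gamma> - 1) / k)" by (rule ext) (simp add: cf_def)
  moreover have "continuous_on {a..b} (\<lambda>t. (FF \<delta> t / \<gamma> - 1) / k)"
    by (intro continuous_on_divide continuous_on_diff continuous_on_const FF_cont[OF a])
       (use k0 g0 in auto)
  ultimately show ?thesis by simp
qed

end


lemma partW:
  assumes k0: "0 < k" and k1: "k < 1" and g0: "0 < \<gamma>" and d1: "1 < \<delta>"
    and dP: "\<delta> < Phi" and g: "\<gamma> > gamma_minus k \<delta>"
  shows "Zset \<delta> \<gamma> k = {}"
proof -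
  have "MF \<delta> < \<gamma>*(1-k)" using g k1 by (simp add: gamma_minus_def pos_divide_less_eq)
  hence M: "FF \<delta> (tm \<delta>) < \<gamma>*(1-k)" using MF_eq[OF d1 dP] by simp
  { fix \<tau> z assume "(\<tau>, z) \<in> Zset \<delta> \<gamma> k"
    hence z: "0 < \<tau>" "norm z = 1" "Im z = cf \<delta> \<gamma> k \<tau>" unfolding Z_cf[OF g0 k0] by auto
    have "\<gamma>*(1-k) \<le> FF \<delta> \<tau>" using cf_bounds[OF g0 k0 z(2,3)] by simp
    moreover have "FF \<delta> \<tau> \<le> FF \<delta> (tm \<delta>)" using FF_le_max[OF d1 dP z(1)] .
    ultimately have False using M by simp }
  thus ?thesis by auto
qed

lemma partX:
  assumes k0: "0 < k" and k1: "k < 1" and g0: "0 < \<gamma>" and d1: "1 < \<delta>"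
    and dP: "\<delta> < Phi" and gp: "gamma_plus k \<delta> < \<gamma>" and gm: "\<gamma> < gamma_minus k \<delta>"
  shows "\<exists>\<tau>1 \<tau>2. 0 < \<tau>1 \<and> \<tau>1 < \<tau>2 \<and> \<tau>2 < 1 \<and>
        (\<forall>\<tau>. (\<tau>1 < \<tau> \<and> \<tau> < \<tau>2 \<longrightarrow> card (fibre \<delta> \<gamma> k \<tau>) = 2) \<and>
             (\<tau> = \<tau>1 \<or> \<tau> = \<tau>2 \<longrightarrow> fibre \<delta> \<gamma> k \<tau> = {cis (3*pi/2)}) \<and>
             (\<tau> \<notin> {\<tau>1..\<tau>2} \<longrightarrow> fibre \<delta> \<gamma> k \<tau> = {})) \<and>
        fold_point \<delta> \<gamma> k \<tau>1 (3*pi/2) \<and> supercritical \<delta> \<gamma> k \<tau>1 (3*pi/2) \<and>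
        fold_point \<delta> \<gamma> k \<tau>2 (3*pi/2) \<and> subcritical \<delta> \<gamma> k \<tau>2 (3*pi/2) \<and>
        simple_closed_curve (Zset \<delta> \<gamma> k) \<and> curve_contractible_in cyl (Zset \<delta> \<gamma> k)"
proof -
  define F where "F = FF \<delta>"
  define M where "M = FF \<delta> (tm \<delta>)"
  define Lm where "Lm = \<gamma>*(1-k)"
  define Lp where "Lp = \<gamma>*(1+k)"
  have hm: "Lm < M" using gm k1 MF_eq[OF d1 dP]
    by (simp add: gamma_minus_def pos_less_divide_eq Lm_def M_def mult.commute)
  have hp: "M < Lp" using gp k0 MF_eq[OF d1 dP]
    by (simp add: gamma_plus_def pos_divide_less_eq Lp_def M_def mult.commute)
  have Lm0: "0 < Lm" using g0 k1 by (simp add: Lm_def)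
  have Fle: "F t \<le> M" if "0 < t" for t using FF_le_max[OF d1 dP that] by (simp add: F_def M_def)
  obtain l r where lr: "0 < l" "l < tm \<delta>" "tm \<delta> < r" "r < 1" "F l = Lm" "F r = Lm"
    and ch: "\<forall>t. 0 < t \<and> t \<le> 1 \<longrightarrow> (F t < Lm \<longleftrightarrow> t < l \<or> r < t) \<and> (F t = Lm \<longleftrightarrow> t = l \<or> t = r)"
    using level[OF d1 dP Lm0] hm unfolding F_def M_def by blast
  have lr2: "l < r" using lr by linarith
  have inner: "Lm < F t" if "l < t" "t < r" for t
  proof -
    have "0 < t" "t \<le> 1" using that lr by auto
    hence "\<not> F t < Lm" "F t \<noteq> Lm" using ch that by auto
    thus ?thesis by simp
  qed
  have f2: "card (fibre \<delta> \<gamma> k t) = 2" if "l < t" "t < r" for t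
    using fib_two[OF g0 k0, of t \<delta>] inner[OF that] Fle[of t] hp that lr
    unfolding F_def Lm_def Lp_def by auto
  have f1: "fibre \<delta> \<gamma> k t = {cis (3*pi/2)}" if "t = l \<or> t = r" for t
    using fib_bot[OF g0 k0, of t \<delta>] that lr cis_3pi2 unfolding F_def Lm_def by auto
  have f0: "fibre \<delta> \<gamma> k t = {}" if "t \<notin> {l..r}" for t
  proof (cases "0 < t \<and> t \<le> 1")
    case True
    hence "F t < Lm" using ch that by auto
    thus ?thesis using fib_empty[OF g0 k0, of t \<delta>] True unfolding F_def Lm_def by auto
  next
    case False thus ?thesis using fib_out[OF g0 k0] by blast
  qed
  have fold: "fold_point \<delta> \<gamma> k t (3*pi/2)" if "t = l \<or> t = r" for t
    by (rule fold_pt[OF g0 k0]) (use that lr sincos_3pi2 in \<open>auto simp: F_def Lm_def\<close>)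
  have sup: "supercritical \<delta> \<gamma> k l (3*pi/2)"
    by (rule super_from[of "r - l" _ _ _ _ "cis (3*pi/2)"]) (use lr2 f2 f1 f0 in auto)
  have sub: "subcritical \<delta> \<gamma> k r (3*pi/2)"
    by (rule sub_from[of "r - l" _ _ _ _ "cis (3*pi/2)"]) (use lr2 f2 f1 f0 in auto)
  have Zeq: "Zset \<delta> \<gamma> k = {(\<tau>,z). l \<le> \<tau> \<and> \<tau> \<le> r \<and> norm z = 1 \<and> Im z = cf \<delta> \<gamma> k \<tau>}"
  proof (intro set_eqI iffI)
    fix x assume "x \<in> Zset \<delta> \<gamma> k"
    then obtain \<tau> z where x: "x = (\<tau>,z)" "0 < \<tau>" "\<tau> \<le> 1" "norm z = 1" "Im z = cf \<delta> \<gamma> k \<tau>"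
      unfolding Z_cf[OF g0 k0] by blast
    have "Lm \<le> F \<tau>" using cf_bounds[OF g0 k0 x(4,5)] unfolding F_def Lm_def by simp
    hence "l \<le> \<tau> \<and> \<tau> \<le> r" using ch x(2,3) by force
    thus "x \<in> {(\<tau>,z). l \<le> \<tau> \<and> \<tau> \<le> r \<and> norm z = 1 \<and> Im z = cf \<delta> \<gamma> k \<tau>}" using x by auto
  next
    fix x assume "x \<in> {(\<tau>,z). l \<le> \<tau> \<and> \<tau> \<le> r \<and> norm z = 1 \<and> Im z = cf \<delta> \<gamma> k \<tau>}"
    thus "x \<in> Zset \<delta> \<gamma> k" unfolding Z_cf[OF g0 k0] using lr by auto
  qed
  have scc: "simple_closed_curve (Zset \<delta> \<gamma> k)" unfolding Zeq
  proof (rule X_curve[OF lr(1) lr2 cf_cont[OF g0 k0 lr(1)]])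
    show "cf \<delta> \<gamma> k l = -1" "cf \<delta> \<gamma> k r = -1"
      using cf_m1[OF g0 k0] lr unfolding F_def Lm_def by auto
    show "-1 < cf \<delta> \<gamma> k t" if "l < t" "t < r" for t
      using cf_gt_m1[OF g0 k0] inner[OF that] unfolding F_def Lm_def by auto
    show "cf \<delta> \<gamma> k t < 1" if "l \<le> t" "t \<le> r" for t
      using cf_lt_1[OF g0 k0] Fle[of t] hp that lr unfolding F_def Lp_def by force
  qed
  have cc: "curve_contractible_in cyl (Zset \<delta> \<gamma> k)"
  proof (rule contr)
    show "Zset \<delta> \<gamma> k \<subseteq> {(\<tau>,z). 0 < \<tau> \<and> \<tau> \<le> 1 \<and> norm z = 1 \<and> z \<noteq> \<i>}"
    proof
      fix x assume "x \<in> Zset \<delta> \<gamma> k"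
      then obtain \<tau> z where x: "x = (\<tau>,z)" "0 < \<tau>" "\<tau> \<le> 1" "norm z = 1" "Im z = cf \<delta> \<gamma> k \<tau>"
        unfolding Z_cf[OF g0 k0] by blast
      have "z \<noteq> \<i>"
      proof
        assume "z = \<i>"
        hence "FF \<delta> \<tau> = Lp" using cf_one[OF g0 k0] x(5) unfolding Lp_def by auto
        thus False using Fle[OF x(2)] hp unfolding F_def by simp
      qed
      thus "x \<in> {(\<tau>,z). 0 < \<tau> \<and> \<tau> \<le> 1 \<and> norm z = 1 \<and> z \<noteq> \<i>}" using x by auto
    qed
  qed
  show ?thesis
    apply (rule exI[of _ l], rule exI[of _ r])
    using lr lr2 f2 f1 f0 fold sup sub scc cc by blast
qed


lemma partY:
  assumes k0: "0 < k" and k1: "k < 1" and g0: "0 < \<gamma>" and d1: "1 < \<delta>"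
    and dP: "\<delta> < Phi" and gp: "\<gamma> < gamma_plus k \<delta>"
  shows "\<exists>a1 a2 a3 a4. 0 < a1 \<and> a1 < a2 \<and> a2 < a3 \<and> a3 < a4 \<and> a4 < 1 \<and>
        (\<forall>\<tau>. ((a1 < \<tau> \<and> \<tau> < a2) \<or> (a3 < \<tau> \<and> \<tau> < a4) \<longrightarrow> card (fibre \<delta> \<gamma> k \<tau>) = 2) \<and>
             (\<tau> = a1 \<longrightarrow> fibre \<delta> \<gamma> k \<tau> = {cis (3*pi/2)}) \<and>
             (\<tau> = a2 \<longrightarrow> fibre \<delta> \<gamma> k \<tau> = {cis (pi/2)}) \<and>
             (\<tau> = a3 \<longrightarrow> fibre \<delta> \<gamma> k \<tau> = {cis (pi/2)}) \<and>
             (\<tau> = a4 \<longrightarrow> fibre \<delta> \<gamma> k \<tau> = {cis (3*pi/2)}) \<and>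
             (\<tau> \<notin> {a1..a2} \<union> {a3..a4} \<longrightarrow> fibre \<delta> \<gamma> k \<tau> = {})) \<and>
        fold_point \<delta> \<gamma> k a1 (3*pi/2) \<and> supercritical \<delta> \<gamma> k a1 (3*pi/2) \<and>
        fold_point \<delta> \<gamma> k a2 (pi/2) \<and> subcritical \<delta> \<gamma> k a2 (pi/2) \<and>
        fold_point \<delta> \<gamma> k a3 (pi/2) \<and> supercritical \<delta> \<gamma> k a3 (pi/2) \<and>
        fold_point \<delta> \<gamma> k a4 (3*pi/2) \<and> subcritical \<delta> \<gamma> k a4 (3*pi/2) \<and>
        (\<exists>A B. Zset \<delta> \<gamma> k = A \<union> B \<and> A \<inter> B = {} \<and>
           simple_closed_curve A \<and> simple_closed_curve B \<and>
           curve_noncontractible_in cyl A \<and> curve_noncontractible_in cyl B)"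
proof -
  define F where "F = FF \<delta>"
  define M where "M = FF \<delta> (tm \<delta>)"
  define Lm where "Lm = \<gamma>*(1-k)"
  define Lp where "Lp = \<gamma>*(1+k)"
  have hp: "Lp < M" using gp k0 MF_eq[OF d1 dP]
    by (simp add: gamma_plus_def pos_less_divide_eq Lp_def M_def mult.commute)
  have Lm0: "0 < Lm" using g0 k1 by (simp add: Lm_def)
  have Lmp: "Lm < Lp" using g0 k0 by (simp add: Lm_def Lp_def)
  have Lp0: "0 < Lp" using Lm0 Lmp by simp
  have hm: "Lm < M" using hp Lmp by simp
  obtain a1 a4 where lr: "0 < a1" "a1 < tm \<delta>" "tm \<delta> < a4" "a4 < 1" "F a1 = Lm" "F a4 = Lm"
    and ch: "\<forall>t. 0 < t \<and> t \<le> 1 \<longrightarrow> (F t < Lm \<longleftrightarrow> t < a1 \<or> a4 < t) \<and> (F t = Lm \<longleftrightarrow> t = a1 \<or> t = a4)"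
    using level[OF d1 dP Lm0] hm unfolding F_def M_def by blast
  obtain a2 a3 where lr': "0 < a2" "a2 < tm \<delta>" "tm \<delta> < a3" "a3 < 1" "F a2 = Lp" "F a3 = Lp"
    and ch': "\<forall>t. 0 < t \<and> t \<le> 1 \<longrightarrow> (F t < Lp \<longleftrightarrow> t < a2 \<or> a3 < t) \<and> (F t = Lp \<longleftrightarrow> t = a2 \<or> t = a3)"
    using level[OF d1 dP Lp0] hp unfolding F_def M_def by blast
  have inc: "F x < F y" if "0 < x" "x < y" "y \<le> tm \<delta>" for x y
    using FF_inc[OF d1 dP that] unfolding F_def .
  have dec: "F y < F x" if "tm \<delta> \<le> x" "x < y" for x y
    using FF_dec[OF d1 dP that] unfolding F_def .
  have a12: "a1 < a2"
  proof (rule ccontr)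
    assume "\<not> a1 < a2"
    hence "a2 = a1 \<or> a2 < a1" by auto
    thus False using inc[of a2 a1] lr lr' Lmp by auto
  qed
  have a34: "a3 < a4"
  proof (rule ccontr)
    assume "\<not> a3 < a4"
    hence "a3 = a4 \<or> a4 < a3" by auto
    thus False using dec[of a4 a3] lr lr' Lmp by auto
  qed
  have a23: "a2 < a3" using lr' by linarith
  have inner: "Lm < F t \<and> F t < Lp" if "(a1 < t \<and> t < a2) \<or> (a3 < t \<and> t < a4)" for t
  proof -
    have t: "0 < t" "t \<le> 1" using that lr lr' a12 a23 a34 by auto
    hence "\<not> F t < Lm" "F t \<noteq> Lm" "F t < Lp" using ch ch' that a12 a23 a34 by auto
    thus ?thesis by simp
  qed
  have f2: "card (fibre \<delta> \<gamma> k t) = 2" if "(a1 < t \<and> t < a2) \<or> (a3 < t \<and> t < a4)" for t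
  proof -
    have "0 < t" "t \<le> 1" using that lr lr' a12 a23 a34 by auto
    thus ?thesis using fib_two[OF g0 k0, of t \<delta>] inner[OF that] unfolding F_def Lm_def Lp_def by auto
  qed
  have fb: "fibre \<delta> \<gamma> k t = {cis (3*pi/2)}" if "t = a1 \<or> t = a4" for t
    using fib_bot[OF g0 k0, of t \<delta>] that lr cis_3pi2 unfolding F_def Lm_def by auto
  have ft: "fibre \<delta> \<gamma> k t = {cis (pi/2)}" if "t = a2 \<or> t = a3" for t
    using fib_top[OF g0 k0, of t \<delta>] that lr' cis_pi2 unfolding F_def Lp_def by auto
  have f0: "fibre \<delta> \<gamma> k t = {}" if "t \<notin> {a1..a2} \<union> {a3..a4}" for t
  proof (cases "0 < t \<and> t \<le> 1")
    case True
    have "t < a1 \<or> a4 < t \<or> (a2 < t \<and> t < a3)" using that by auto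
    hence "F t < Lm \<or> F t > Lp"
    proof (elim disjE)
      assume "t < a1" hence "F t < Lm" using ch True by auto
      thus ?thesis by simp
    next
      assume "a4 < t" hence "F t < Lm" using ch True by auto
      thus ?thesis by simp
    next
      assume a: "a2 < t \<and> t < a3"
      hence "\<not> F t < Lp" "F t \<noteq> Lp" using ch' True by auto
      thus ?thesis by simp
    qed
    thus ?thesis using fib_empty[OF g0 k0, of t \<delta>] True unfolding F_def Lm_def Lp_def by auto
  next
    case False thus ?thesis using fib_out[OF g0 k0] by blast
  qed
  have foldb: "fold_point \<delta> \<gamma> k t (3*pi/2)" if "t = a1 \<or> t = a4" for t
    by (rule fold_pt[OF g0 k0]) (use that lr sincos_3pi2 in \<open>auto simp: F_def Lm_def\<close>)
  have foldt: "fold_point \<delta> \<gamma> k t (pi/2)" if "t = a2 \<or> t = a3" for t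
    by (rule fold_pt[OF g0 k0]) (use that lr' in \<open>auto simp: F_def Lp_def\<close>)
  have s1: "supercritical \<delta> \<gamma> k a1 (3*pi/2)"
    by (rule super_from[of "a2 - a1" _ _ _ _ "cis (3*pi/2)"]) (use a12 a23 a34 f2 fb f0 in auto)
  have s2: "subcritical \<delta> \<gamma> k a2 (pi/2)"
  proof (rule sub_from[of "min (a2 - a1) (a3 - a2)" _ _ _ _ "cis (pi/2)"])
    show "0 < min (a2 - a1) (a3 - a2)" using a12 a23 by simp
    show "card (fibre \<delta> \<gamma> k t) = 2" if "a2 - min (a2 - a1) (a3 - a2) < t" "t < a2" for t
      using f2[of t] that by (auto simp: min_def split: if_split_asm)
    show "fibre \<delta> \<gamma> k a2 = {cis (pi/2)}" using ft by simp
    show "fibre \<delta> \<gamma> k t = {}" if "a2 < t" "t < a2 + min (a2 - a1) (a3 - a2)" for t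
      using f0[of t] that a12 a23 a34 by (auto simp: min_def split: if_split_asm)
  qed
  have s3: "supercritical \<delta> \<gamma> k a3 (pi/2)"
  proof (rule super_from[of "min (a3 - a2) (a4 - a3)" _ _ _ _ "cis (pi/2)"])
    show "0 < min (a3 - a2) (a4 - a3)" using a34 a23 by simp
    show "card (fibre \<delta> \<gamma> k t) = 2" if "a3 < t" "t < a3 + min (a3 - a2) (a4 - a3)" for t
      using f2[of t] that by (auto simp: min_def split: if_split_asm)
    show "fibre \<delta> \<gamma> k a3 = {cis (pi/2)}" using ft by simp
    show "fibre \<delta> \<gamma> k t = {}" if "a3 - min (a3 - a2) (a4 - a3) < t" "t < a3" for t
      using f0[of t] that a12 a23 a34 by (auto simp: min_def split: if_split_asm)
  qed
  have s4: "subcritical \<delta> \<gamma> k a4 (3*pi/2)"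
    by (rule sub_from[of "a4 - a3" _ _ _ _ "cis (3*pi/2)"]) (use a12 a23 a34 f2 fb f0 in auto)
  define A where "A = {(\<tau>,z). a1 \<le> \<tau> \<and> \<tau> \<le> a2 \<and> norm z = 1 \<and> Im z = cf \<delta> \<gamma> k \<tau>}"
  define B where "B = {(\<tau>,z). a3 \<le> \<tau> \<and> \<tau> \<le> a4 \<and> norm z = 1 \<and> Im z = cf \<delta> \<gamma> k \<tau>}"
  have Zeq: "Zset \<delta> \<gamma> k = A \<union> B"
  proof (intro set_eqI iffI)
    fix x assume "x \<in> Zset \<delta> \<gamma> k"
    then obtain \<tau> z where x: "x = (\<tau>,z)" "0 < \<tau>" "\<tau> \<le> 1" "norm z = 1" "Im z = cf \<delta> \<gamma> k \<tau>"
      unfolding Z_cf[OF g0 k0] by blast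
    have b: "Lm \<le> F \<tau>" "F \<tau> \<le> Lp" using cf_bounds[OF g0 k0 x(4,5)] unfolding F_def Lm_def Lp_def by simp_all
    have "\<tau> \<in> {a1..a2} \<union> {a3..a4}"
    proof (rule ccontr)
      assume "\<tau> \<notin> {a1..a2} \<union> {a3..a4}"
      hence "\<tau> < a1 \<or> a4 < \<tau> \<or> (a2 < \<tau> \<and> \<tau> < a3)" by auto
      moreover have "\<not> (\<tau> < a1 \<or> a4 < \<tau>)" using ch x(2,3) b by auto
      moreover have "\<not> (a2 < \<tau> \<and> \<tau> < a3)"
      proof
        assume "a2 < \<tau> \<and> \<tau> < a3"
        hence "\<not> F \<tau> < Lp" "F \<tau> \<noteq> Lp" using ch' x(2,3) by auto
        thus False using b by simp
      qed
      ultimately show False by blast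
    qed
    thus "x \<in> A \<union> B" using x unfolding A_def B_def by auto
  next
    fix x assume "x \<in> A \<union> B"
    thus "x \<in> Zset \<delta> \<gamma> k" unfolding Z_cf[OF g0 k0] A_def B_def using lr lr' a12 a23 a34 by auto
  qed
  have AB: "A \<inter> B = {}" unfolding A_def B_def using a23 by auto
  have cA: "simple_closed_curve A \<and> curve_noncontractible_in cyl A" unfolding A_def
  proof (rule graph_inc[OF lr(1) a12 _ cf_cont[OF g0 k0 lr(1)]])
    show "a2 \<le> 1" using lr' by simp
    show "cf \<delta> \<gamma> k x < cf \<delta> \<gamma> k y" if "a1 \<le> x" "x < y" "y \<le> a2" for x y
      using cf_lt[OF g0 k0] inc[of x y] that lr lr' unfolding F_def by auto
    show "cf \<delta> \<gamma> k a1 = -1" using cf_m1[OF g0 k0] lr unfolding F_def Lm_def by auto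
    show "cf \<delta> \<gamma> k a2 = 1" using cf_p1[OF g0 k0] lr' unfolding F_def Lp_def by auto
  qed
  have a30: "0 < a3" using lr' by linarith
  have cB: "simple_closed_curve B \<and> curve_noncontractible_in cyl B" unfolding B_def
  proof (rule graph_dec[OF a30 a34 _ cf_cont[OF g0 k0 a30]])
    show "a4 \<le> 1" using lr by simp
    show "cf \<delta> \<gamma> k y < cf \<delta> \<gamma> k x" if "a3 \<le> x" "x < y" "y \<le> a4" for x y
      using cf_lt[OF g0 k0] dec[of x y] that lr lr' unfolding F_def by auto
    show "cf \<delta> \<gamma> k a3 = 1" using cf_p1[OF g0 k0] lr' unfolding F_def Lp_def by auto
    show "cf \<delta> \<gamma> k a4 = -1" using cf_m1[OF g0 k0] lr unfolding F_def Lm_def by auto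
  qed
  have E: "\<exists>A B. Zset \<delta> \<gamma> k = A \<union> B \<and> A \<inter> B = {} \<and>
           simple_closed_curve A \<and> simple_closed_curve B \<and>
           curve_noncontractible_in cyl A \<and> curve_noncontractible_in cyl B"
    using Zeq AB cA cB by blast
  have P1: "\<forall>\<tau>. ((a1 < \<tau> \<and> \<tau> < a2) \<or> (a3 < \<tau> \<and> \<tau> < a4) \<longrightarrow> card (fibre \<delta> \<gamma> k \<tau>) = 2) \<and>
             (\<tau> = a1 \<longrightarrow> fibre \<delta> \<gamma> k \<tau> = {cis (3*pi/2)}) \<and>
             (\<tau> = a2 \<longrightarrow> fibre \<delta> \<gamma> k \<tau> = {cis (pi/2)}) \<and>
             (\<tau> = a3 \<longrightarrow> fibre \<delta> \<gamma> k \<tau> = {cis (pi/2)}) \<and>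
             (\<tau> = a4 \<longrightarrow> fibre \<delta> \<gamma> k \<tau> = {cis (3*pi/2)}) \<and>
             (\<tau> \<notin> {a1..a2} \<union> {a3..a4} \<longrightarrow> fibre \<delta> \<gamma> k \<tau> = {})"
    using f2 fb ft f0 by blast
  have P2: "fold_point \<delta> \<gamma> k a1 (3*pi/2)" "fold_point \<delta> \<gamma> k a4 (3*pi/2)"
    "fold_point \<delta> \<gamma> k a2 (pi/2)" "fold_point \<delta> \<gamma> k a3 (pi/2)"
    using foldb foldt by auto
  have P0: "0 < a1" "a4 < 1" using lr by auto
  show ?thesis
    by (rule exI[of _ a1], rule exI[of _ a2], rule exI[of _ a3], rule exI[of _ a4])
       (intro conjI P0 a12 a23 a34 P1 P2 s1 s2 s3 s4 E)
qed


lemma partZ: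
  assumes k0: "0 < k" and k1: "k < 1" and g0: "0 < \<gamma>" and d1: "1 < \<delta>"
    and dP: "\<delta> > Phi"
  shows "\<exists>b1 b2. 0 < b1 \<and> b1 < b2 \<and> b2 < 1 \<and>
        (\<forall>\<tau>. (b1 < \<tau> \<and> \<tau> < b2 \<longrightarrow> card (fibre \<delta> \<gamma> k \<tau>) = 2) \<and>
             (\<tau> = b1 \<longrightarrow> fibre \<delta> \<gamma> k \<tau> = {cis (pi/2)}) \<and>
             (\<tau> = b2 \<longrightarrow> fibre \<delta> \<gamma> k \<tau> = {cis (3*pi/2)}) \<and>
             (\<tau> \<notin> {b1..b2} \<longrightarrow> fibre \<delta> \<gamma> k \<tau> = {})) \<and>
        fold_point \<delta> \<gamma> k b1 (pi/2) \<and> supercritical \<delta> \<gamma> k b1 (pi/2) \<and>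
        fold_point \<delta> \<gamma> k b2 (3*pi/2) \<and> subcritical \<delta> \<gamma> k b2 (3*pi/2) \<and>
        simple_closed_curve (Zset \<delta> \<gamma> k) \<and> curve_noncontractible_in cyl (Zset \<delta> \<gamma> k)"
proof -
  define F where "F = FF \<delta>"
  define Lm where "Lm = \<gamma>*(1-k)"
  define Lp where "Lp = \<gamma>*(1+k)"
  have Lm0: "0 < Lm" using g0 k1 by (simp add: Lm_def)
  have Lmp: "Lm < Lp" using g0 k0 by (simp add: Lm_def Lp_def)
  have Lp0: "0 < Lp" using Lm0 Lmp by simp
  obtain b1 where b1: "0 < b1" "b1 < 1" "F b1 = Lp"
    and ch1: "\<forall>t. 0 < t \<and> t \<le> 1 \<longrightarrow> (F t < Lp \<longleftrightarrow> b1 < t) \<and> (F t = Lp \<longleftrightarrow> t = b1)"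
    using level2[OF d1 dP Lp0] unfolding F_def by blast
  obtain b2 where b2: "0 < b2" "b2 < 1" "F b2 = Lm"
    and ch2: "\<forall>t. 0 < t \<and> t \<le> 1 \<longrightarrow> (F t < Lm \<longleftrightarrow> b2 < t) \<and> (F t = Lm \<longleftrightarrow> t = b2)"
    using level2[OF d1 dP Lm0] unfolding F_def by blast
  have dec: "F y < F x" if "0 < x" "x < y" for x y
    using FF_dec2[OF d1 dP that] unfolding F_def .
  have b12: "b1 < b2"
  proof (rule ccontr)
    assume "\<not> b1 < b2"
    hence "b2 = b1 \<or> b2 < b1" by auto
    thus False using dec[of b2 b1] b1 b2 Lmp by auto
  qed
  have inner: "Lm < F t \<and> F t < Lp" if "b1 < t" "t < b2" for t
  proof -
    have t: "0 < t" "t \<le> 1" using that b1 b2 by auto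
    hence "\<not> F t < Lm" "F t \<noteq> Lm" "F t < Lp" using ch1 ch2 that by auto
    thus ?thesis by simp
  qed
  have f2: "card (fibre \<delta> \<gamma> k t) = 2" if "b1 < t" "t < b2" for t
  proof -
    have "0 < t" "t \<le> 1" using that b1 b2 by auto
    thus ?thesis using fib_two[OF g0 k0, of t \<delta>] inner[OF that] unfolding F_def Lm_def Lp_def by auto
  qed
  have fb: "fibre \<delta> \<gamma> k b2 = {cis (3*pi/2)}"
    using fib_bot[OF g0 k0, of b2 \<delta>] b2 cis_3pi2 unfolding F_def Lm_def by auto
  have ft: "fibre \<delta> \<gamma> k b1 = {cis (pi/2)}"
    using fib_top[OF g0 k0, of b1 \<delta>] b1 cis_pi2 unfolding F_def Lp_def by auto
  have f0: "fibre \<delta> \<gamma> k t = {}" if "t \<notin> {b1..b2}" for t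
  proof (cases "0 < t \<and> t \<le> 1")
    case True
    have "t < b1 \<or> b2 < t" using that by auto
    hence "F t < Lm \<or> F t > Lp"
    proof
      assume "t < b1"
      hence "\<not> F t < Lp" "F t \<noteq> Lp" using ch1 True by auto
      thus ?thesis by simp
    next
      assume "b2 < t" hence "F t < Lm" using ch2 True by auto
      thus ?thesis by simp
    qed
    thus ?thesis using fib_empty[OF g0 k0, of t \<delta>] True unfolding F_def Lm_def Lp_def by auto
  next
    case False thus ?thesis using fib_out[OF g0 k0] by blast
  qed
  have fold1: "fold_point \<delta> \<gamma> k b1 (pi/2)"
    by (rule fold_pt[OF g0 k0]) (use b1 in \<open>auto simp: F_def Lp_def\<close>)
  have fold2: "fold_point \<delta> \<gamma> k b2 (3*pi/2)"
    by (rule fold_pt[OF g0 k0]) (use b2 sincos_3pi2 in \<open>auto simp: F_def Lm_def\<close>)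
  have s1: "supercritical \<delta> \<gamma> k b1 (pi/2)"
    by (rule super_from[of "b2 - b1" _ _ _ _ "cis (pi/2)"]) (use b12 f2 ft f0 in auto)
  have s2: "subcritical \<delta> \<gamma> k b2 (3*pi/2)"
    by (rule sub_from[of "b2 - b1" _ _ _ _ "cis (3*pi/2)"]) (use b12 f2 fb f0 in auto)
  have Zeq: "Zset \<delta> \<gamma> k = {(\<tau>,z). b1 \<le> \<tau> \<and> \<tau> \<le> b2 \<and> norm z = 1 \<and> Im z = cf \<delta> \<gamma> k \<tau>}"
  proof (intro set_eqI iffI)
    fix x assume "x \<in> Zset \<delta> \<gamma> k"
    then obtain \<tau> z where x: "x = (\<tau>,z)" "0 < \<tau>" "\<tau> \<le> 1" "norm z = 1" "Im z = cf \<delta> \<gamma> k \<tau>"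
      unfolding Z_cf[OF g0 k0] by blast
    have b: "Lm \<le> F \<tau>" "F \<tau> \<le> Lp" using cf_bounds[OF g0 k0 x(4,5)] unfolding F_def Lm_def Lp_def by simp_all
    have "\<not> b2 < \<tau>" using ch2 x(2,3) b by auto
    moreover have "\<not> \<tau> < b1"
    proof
      assume "\<tau> < b1"
      hence "\<not> F \<tau> < Lp" "F \<tau> \<noteq> Lp" using ch1 x(2,3) by auto
      thus False using b by simp
    qed
    ultimately show "x \<in> {(\<tau>,z). b1 \<le> \<tau> \<and> \<tau> \<le> b2 \<and> norm z = 1 \<and> Im z = cf \<delta> \<gamma> k \<tau>}"
      using x by auto
  next
    fix x assume "x \<in> {(\<tau>,z). b1 \<le> \<tau> \<and> \<tau> \<le> b2 \<and> norm z = 1 \<and> Im z = cf \<delta> \<gamma> k \<tau>}"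
    thus "x \<in> Zset \<delta> \<gamma> k" unfolding Z_cf[OF g0 k0] using b1 b2 by auto
  qed
  have cZ: "simple_closed_curve (Zset \<delta> \<gamma> k) \<and> curve_noncontractible_in cyl (Zset \<delta> \<gamma> k)"
    unfolding Zeq
  proof (rule graph_dec[OF b1(1) b12 _ cf_cont[OF g0 k0 b1(1)]])
    show "b2 \<le> 1" using b2 by simp
    show "cf \<delta> \<gamma> k y < cf \<delta> \<gamma> k x" if "b1 \<le> x" "x < y" "y \<le> b2" for x y
      using cf_lt[OF g0 k0] dec[of x y] that b1 unfolding F_def by auto
    show "cf \<delta> \<gamma> k b1 = 1" using cf_p1[OF g0 k0] b1 unfolding F_def Lp_def by auto
    show "cf \<delta> \<gamma> k b2 = -1" using cf_m1[OF g0 k0] b2 unfolding F_def Lm_def by auto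
  qed
  have P1: "\<forall>\<tau>. (b1 < \<tau> \<and> \<tau> < b2 \<longrightarrow> card (fibre \<delta> \<gamma> k \<tau>) = 2) \<and>
             (\<tau> = b1 \<longrightarrow> fibre \<delta> \<gamma> k \<tau> = {cis (pi/2)}) \<and>
             (\<tau> = b2 \<longrightarrow> fibre \<delta> \<gamma> k \<tau> = {cis (3*pi/2)}) \<and>
             (\<tau> \<notin> {b1..b2} \<longrightarrow> fibre \<delta> \<gamma> k \<tau> = {})"
    using f2 fb ft f0 by blast
  show ?thesis
    by (rule exI[of _ b1], rule exI[of _ b2])
       (intro conjI b1(1) b2(2) b12 P1 fold1 fold2 s1 s2 cZ[THEN conjunct1] cZ[THEN conjunct2])
qed


theorem mainTheorem3:
  fixes k \<gamma> \<delta> :: real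
  assumes hk: "0 < k" "k < 1" and h\<gamma>: "0 < \<gamma>" and h\<delta>: "1 < \<delta>"
  defines "Z \<equiv> Zset \<delta> \<gamma> k" and "Fib \<equiv> fibre \<delta> \<gamma> k"
  shows
   "(\<delta> < Phi \<and> \<gamma> > gamma_minus k \<delta> \<longrightarrow> Z = {})
  \<and> (\<delta> < Phi \<and> gamma_plus k \<delta> < \<gamma> \<and> \<gamma> < gamma_minus k \<delta> \<longrightarrow>
      (\<exists>\<tau>1 \<tau>2. 0 < \<tau>1 \<and> \<tau>1 < \<tau>2 \<and> \<tau>2 < 1 \<and>
        (\<forall>\<tau>. (\<tau>1 < \<tau> \<and> \<tau> < \<tau>2 \<longrightarrow> card (Fib \<tau>) = 2) \<and>
             (\<tau> = \<tau>1 \<or> \<tau> = \<tau>2 \<longrightarrow> Fib \<tau> = {cis (3*pi/2)}) \<and>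
             (\<tau> \<notin> {\<tau>1..\<tau>2} \<longrightarrow> Fib \<tau> = {})) \<and>
        fold_point \<delta> \<gamma> k \<tau>1 (3*pi/2) \<and> supercritical \<delta> \<gamma> k \<tau>1 (3*pi/2) \<and>
        fold_point \<delta> \<gamma> k \<tau>2 (3*pi/2) \<and> subcritical \<delta> \<gamma> k \<tau>2 (3*pi/2) \<and>
        simple_closed_curve Z \<and> curve_contractible_in cyl Z))
  \<and> (\<delta> < Phi \<and> \<gamma> < gamma_plus k \<delta> \<longrightarrow>
      (\<exists>a1 a2 a3 a4. 0 < a1 \<and> a1 < a2 \<and> a2 < a3 \<and> a3 < a4 \<and> a4 < 1 \<and>
        (\<forall>\<tau>. ((a1 < \<tau> \<and> \<tau> < a2) \<or> (a3 < \<tau> \<and> \<tau> < a4) \<longrightarrow> card (Fib \<tau>) = 2) \<and>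
             (\<tau> = a1 \<longrightarrow> Fib \<tau> = {cis (3*pi/2)}) \<and>
             (\<tau> = a2 \<longrightarrow> Fib \<tau> = {cis (pi/2)}) \<and>
             (\<tau> = a3 \<longrightarrow> Fib \<tau> = {cis (pi/2)}) \<and>
             (\<tau> = a4 \<longrightarrow> Fib \<tau> = {cis (3*pi/2)}) \<and>
             (\<tau> \<notin> {a1..a2} \<union> {a3..a4} \<longrightarrow> Fib \<tau> = {})) \<and>
        fold_point \<delta> \<gamma> k a1 (3*pi/2) \<and> supercritical \<delta> \<gamma> k a1 (3*pi/2) \<and>
        fold_point \<delta> \<gamma> k a2 (pi/2) \<and> subcritical \<delta> \<gamma> k a2 (pi/2) \<and>
        fold_point \<delta> \<gamma> k a3 (pi/2) \<and> supercritical \<delta> \<gamma> k a3 (pi/2) \<and>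
        fold_point \<delta> \<gamma> k a4 (3*pi/2) \<and> subcritical \<delta> \<gamma> k a4 (3*pi/2) \<and>
        (\<exists>A B. Z = A \<union> B \<and> A \<inter> B = {} \<and>
           simple_closed_curve A \<and> simple_closed_curve B \<and>
           curve_noncontractible_in cyl A \<and> curve_noncontractible_in cyl B)))
  \<and> (\<delta> > Phi \<longrightarrow>
      (\<exists>b1 b2. 0 < b1 \<and> b1 < b2 \<and> b2 < 1 \<and>
        (\<forall>\<tau>. (b1 < \<tau> \<and> \<tau> < b2 \<longrightarrow> card (Fib \<tau>) = 2) \<and>
             (\<tau> = b1 \<longrightarrow> Fib \<tau> = {cis (pi/2)}) \<and>
             (\<tau> = b2 \<longrightarrow> Fib \<tau> = {cis (3*pi/2)}) \<and>
             (\<tau> \<notin> {b1..b2} \<longrightarrow> Fib \<tau> = {})) \<and>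
        fold_point \<delta> \<gamma> k b1 (pi/2) \<and> supercritical \<delta> \<gamma> k b1 (pi/2) \<and>
        fold_point \<delta> \<gamma> k b2 (3*pi/2) \<and> subcritical \<delta> \<gamma> k b2 (3*pi/2) \<and>
        simple_closed_curve Z \<and> curve_noncontractible_in cyl Z))"
  unfolding Z_def Fib_def
  apply (intro conjI impI)
  subgoal by (rule partW[OF hk h\<gamma> h\<delta>]) auto
  subgoal by (rule partX[OF hk h\<gamma> h\<delta>]) auto
  subgoal by (rule partY[OF hk h\<gamma> h\<delta>]) auto
  subgoal by (rule partZ[OF hk h\<gamma> h\<delta>]) auto
  done

end
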